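(* Let $V$ be an optimal prefix-free machine, and for real $T>0$ let $\Theta_V(T)=\sum_{s\in\{0,1\}^*,\,H_V(s)<|s|}2^{-|s|/T}$. For every $T\in(0,1)$, if $\Theta_V(T)$ is right-computable, then $T$ is weakly Chaitin $T$-random.
   Context: $\{0,1\}^*$ is the set of finite binary strings; $|s|$ is the length of $s$. A prefix-free machine is a partial recursive function $C:\{0,1\}^*\to\{0,1\}^*$ whose domain is prefix-free. $H_C(s)=\min\{|p| : C(p)=s\}$ (possibly $\infty$). A prefix-free machine $U$ is optimal if for every prefix-free machine $C$ there is $d\in\mathbb{N}$ such that for every $p\in\mathrm{Dom}\,C$ there is $q\in\mathrm{Dom}\,U$ with $U(q)=C(p)$ and $|q|\le|p|+d$. A particular optimal prefix-free machine $U$ is fixed and $H(s):=H_U(s)$. For a real $\alpha$ and $n\ge1$, $\alpha\restriction n$ denotes the first $n$ bits of the base-two expansion of $\alpha-\lfloor\alpha\rfloor$ (the expansion with infinitely many zeros). A real $\alpha$ is right-computable if there is a total recursive $f:\mathbb{N}^+\to\mathbb{Q}$ with $\alpha\le f(n)$ for all $n$ and $\lim_n f(n)=\alpha$. For $T\in(0,1]$, $\alpha$ is weakly Chaitin $T$-random if there is $c\in\mathbb{N}$ with $Tn-c\le H(\alpha\restriction n)$ for all $n\in\mathbb{N}^+$. *)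

theory Defs
  imports "HOL-Analysis.Analysis" "HOL-Library.Extended_Nat"
begin

datatype recf =
    Zero
  | Succ
  | Proj nat
  | Comp recf "recf list"
  | PrimRec recf recf
  | Minimise recf

text \<open>reval c xs y: the function coded by c, applied to argument list xs, converges
  with value y.  (Extra arguments are ignored; this does not change the class of
  partial recursive functions.)\<close>
inductive reval :: "recf \<Rightarrow> nat list \<Rightarrow> nat \<Rightarrow> bool" where
  reval_zero: "reval Zero xs 0"
| reval_succ: "reval Succ (x # xs) (Suc x)"
| reval_proj: "i < length xs \<Longrightarrow> reval (Proj i) xs (xs ! i)"
| reval_comp: "length ys = length gs \<Longrightarrow> (\<forall>i < length gs. reval (gs ! i) xs (ys ! i))
      \<Longrightarrow> reval f ys z \<Longrightarrow> reval (Comp f gs) xs z"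
| reval_pr0: "reval f xs z \<Longrightarrow> reval (PrimRec f g) (0 # xs) z"
| reval_prS: "reval (PrimRec f g) (n # xs) y \<Longrightarrow> reval g (n # y # xs) z
      \<Longrightarrow> reval (PrimRec f g) (Suc n # xs) z"
| reval_mn: "reval f (n # xs) 0 \<Longrightarrow> (\<forall>m < n. \<exists>y. reval f (m # xs) (Suc y))
      \<Longrightarrow> reval (Minimise f) xs n"

definition partial_recursive :: "(nat \<Rightarrow> nat option) \<Rightarrow> bool" where
  "partial_recursive \<phi> \<longleftrightarrow> (\<exists>c. \<forall>x y. \<phi> x = Some y \<longleftrightarrow> reval c [x] y)"

definition total_recursive :: "(nat \<Rightarrow> nat) \<Rightarrow> bool" where
  "total_recursive g \<longleftrightarrow> partial_recursive (\<lambda>x. Some (g x))"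

text \<open>Binary strings are bool lists (True = 1).  Bijective encoding into nat.\<close>
fun str_enc :: "bool list \<Rightarrow> nat" where
  "str_enc [] = 0"
| "str_enc (b # bs) = 2 * str_enc bs + (if b then 2 else 1)"

definition partial_recursive_str :: "(bool list \<Rightarrow> bool list option) \<Rightarrow> bool" where
  "partial_recursive_str C \<longleftrightarrow>
     partial_recursive (\<lambda>x. map_option str_enc (C (inv str_enc x)))"

definition prefix_free :: "bool list set \<Rightarrow> bool" where
  "prefix_free A \<longleftrightarrow> (\<forall>p\<in>A. \<forall>q. p @ q \<in> A \<longrightarrow> q = [])"

definition prefix_free_machine :: "(bool list \<Rightarrow> bool list option) \<Rightarrow> bool" where
  "prefix_free_machine C \<longleftrightarrow> partial_recursive_str C \<and> prefix_free (dom C)"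

definition Hc :: "(bool list \<Rightarrow> bool list option) \<Rightarrow> bool list \<Rightarrow> enat" where
  "Hc C s = (INF p \<in> {p. C p = Some s}. enat (length p))"

definition optimal_machine :: "(bool list \<Rightarrow> bool list option) \<Rightarrow> bool" where
  "optimal_machine U \<longleftrightarrow> prefix_free_machine U \<and>
     (\<forall>C. prefix_free_machine C \<longrightarrow>
        (\<exists>d::nat. \<forall>p \<in> dom C. \<exists>q \<in> dom U. U q = C p \<and> length q \<le> length p + d))"

text \<open>First n bits of the base-two expansion of frac alpha (the expansion with
  infinitely many zeros): bit i (i = 1..n) is floor (frac alpha * 2^i) mod 2.\<close>
definition real_prefix :: "real \<Rightarrow> nat \<Rightarrow> bool list" where
  "real_prefix \<alpha> n = map (\<lambda>i. odd (\<lfloor>frac \<alpha> * 2 ^ Suc i\<rfloor>)) [0..<n]"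

definition computable_rat_seq :: "(nat \<Rightarrow> rat) \<Rightarrow> bool" where
  "computable_rat_seq f \<longleftrightarrow> (\<exists>a b c. total_recursive a \<and> total_recursive b \<and> total_recursive c \<and>
     (\<forall>n. f n = (of_int (int (a n) - int (b n))) / of_nat (Suc (c n))))"

definition right_computable :: "real \<Rightarrow> bool" where
  "right_computable \<alpha> \<longleftrightarrow> (\<exists>f. computable_rat_seq f \<and> (\<forall>n\<ge>1. \<alpha> \<le> of_rat (f n)) \<and>
     (\<lambda>n. of_rat (f n)) \<longlonglongrightarrow> \<alpha>)"

definition weakly_chaitin_random :: "(bool list \<Rightarrow> bool list option) \<Rightarrow> real \<Rightarrow> real \<Rightarrow> bool" where
  "weakly_chaitin_random U T \<alpha> \<longleftrightarrow>
     (\<exists>c::nat. \<forall>n\<ge>1. ereal (T * real n - real c) \<le>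
        (case Hc U (real_prefix \<alpha> n) of enat k \<Rightarrow> ereal (real k) | \<infinity> \<Rightarrow> \<infinity>))"

definition Theta :: "(bool list \<Rightarrow> bool list option) \<Rightarrow> real \<Rightarrow> real" where
  "Theta V T = infsum (\<lambda>s. 2 powr (- real (length s) / T)) {s. Hc V s < enat (length s)}"

end

theory Submission
  imports Defs "HOL-Library.Nat_Bijection"
begin

inductive_cases reval_MinE: "reval (Minimise f) xs n"
thm reval_MinE

lemma reval_det: "reval c xs y \<Longrightarrow> reval c xs y' \<Longrightarrow> y' = y"
proof (induction arbitrary: y' rule: reval.induct)
  case (reval_zero xs) from reval_zero.prems show ?case by cases auto
next
  case (reval_succ x xs) from reval_succ.prems show ?case by cases auto
next
  case (reval_proj i xs) from reval_proj.prems show ?case by cases auto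
next
  case (reval_comp ys gs xs f z)
  from reval_comp.prems obtain ys' where ys': "length ys' = length gs"
     "\<forall>i<length gs. reval (gs ! i) xs (ys' ! i)" "reval f ys' y'"
    by cases auto
  have "ys' ! i = ys ! i" if "i < length gs" for i
  proof -
    have "reval (gs ! i) xs (ys' ! i)" using ys'(2) that by simp
    moreover have "\<forall>y'. reval (gs ! i) xs y' \<longrightarrow> y' = ys ! i"
      using reval_comp.IH that by blast
    ultimately show ?thesis by simp
  qed
  then have "ys' = ys"
    using ys'(1) reval_comp.hyps(1) by (simp add: nth_equalityI)
  then show ?case using reval_comp ys' by auto
next
  case (reval_pr0 f xs z g)
  from reval_pr0.prems show ?case by cases (use reval_pr0.IH in auto)
next
  case (reval_prS f g n xs y z)
  from reval_prS.prems obtain y2 where "reval (PrimRec f g) (n # xs) y2" "reval g (n # y2 # xs) y'"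
    by cases auto
  then show ?case using reval_prS.IH by metis
next
  case (reval_mn f n xs)
  from reval_mn.prems have a: "reval f (y' # xs) 0" "\<forall>m<y'. \<exists>y. reval f (m # xs) (Suc y)"
    by (auto elim!: reval_MinE)
  show ?case
  proof (rule ccontr)
    assume "y' \<noteq> n"
    then consider "y' < n" | "n < y'" by linarith
    then show False
    proof cases
      case 1 with reval_mn.IH(2) a(1) show False by fastforce
    next
      case 2 with a(2) reval_mn.IH(1) show False by fastforce
    qed
  qed
qed

lemma reval_comp1I: "reval g xs y \<Longrightarrow> reval f [y] z \<Longrightarrow> reval (Comp f [g]) xs z"
  by (rule reval_comp[where ys="[y]"]) auto

lemma reval_comp2I: "reval g xs y \<Longrightarrow> reval h xs y' \<Longrightarrow> reval f [y, y'] z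
   \<Longrightarrow> reval (Comp f [g, h]) xs z"
  by (rule reval_comp[where ys="[y, y']"]) (auto simp: less_Suc_eq nth_Cons split: nat.split)

lemma reval_comp3I: "reval g xs y \<Longrightarrow> reval h xs y' \<Longrightarrow> reval k xs y'' \<Longrightarrow> reval f [y, y', y''] z
   \<Longrightarrow> reval (Comp f [g, h, k]) xs z"
  by (rule reval_comp[where ys="[y, y', y'']"]) (auto simp: less_Suc_eq nth_Cons split: nat.split)

lemma reval_proj0: "reval (Proj 0) (x # xs) x"
  using reval_proj[of 0 "x # xs"] by simp
lemma reval_proj1: "reval (Proj 1) (x # y # xs) y"
  using reval_proj[of 1 "x # y # xs"] by simp
lemma reval_proj2: "reval (Proj 2) (x # y # z # xs) z"
  using reval_proj[of 2 "x # y # z # xs"] by (simp add: numeral_2_eq_2)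

definition cAdd :: recf where "cAdd = PrimRec (Proj 0) (Comp Succ [Proj 1])"
lemma reval_add: "reval cAdd [a, b] (a + b)"
proof (induction a)
  case 0 show ?case unfolding cAdd_def by (rule reval_pr0) (simp add: reval_proj0)
next
  case (Suc a)
  have "reval (Comp Succ [Proj 1]) [a, a + b, b] (Suc (a + b))"
    by (rule reval_comp1I[OF reval_proj1 reval_succ])
  then show ?case unfolding cAdd_def
    using reval_prS[OF Suc[unfolded cAdd_def]] by simp
qed

definition cMul :: recf where "cMul = PrimRec Zero (Comp cAdd [Proj 1, Proj 2])"
lemma reval_mul: "reval cMul [a, b] (a * b)"
proof (induction a)
  case 0 show ?case unfolding cMul_def using reval_pr0[OF reval_zero] by simp
next
  case (Suc a)
  have "reval (Comp cAdd [Proj 1, Proj 2]) [a, a*b, b] (a * b + b)"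
    by (rule reval_comp2I[OF reval_proj1 reval_proj2 reval_add])
  then show ?case unfolding cMul_def
    using reval_prS[OF Suc[unfolded cMul_def]] by (simp add: add.commute)
qed

definition cPred :: recf where "cPred = PrimRec Zero (Proj 0)"
lemma reval_pred: "reval cPred [a] (a - 1)"
proof (induction a)
  case 0 then show ?case unfolding cPred_def using reval_pr0[OF reval_zero] by simp
next
  case (Suc n)
  then show ?case unfolding cPred_def using reval_prS[of Zero "Proj 0" n "[]" "n - 1" n] reval_proj0
    by simp
qed

definition cSub :: recf where "cSub = PrimRec (Proj 0) (Comp cPred [Proj 1])"
lemma reval_sub: "reval cSub [a, b] (b - a)"
proof (induction a)
  case 0 show ?case unfolding cSub_def by (rule reval_pr0) (simp add: reval_proj0)
next
  case (Suc a)
  have "reval (Comp cPred [Proj 1]) [a, b - a, b] (b - a - 1)"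
    by (rule reval_comp1I[OF reval_proj1 reval_pred])
  then show ?case unfolding cSub_def
    using reval_prS[OF Suc[unfolded cSub_def]] by simp
qed

definition cTri :: recf where "cTri = PrimRec Zero (Comp cAdd [Proj 1, Comp Succ [Proj 0]])"
lemma reval_tri: "reval cTri [a] (triangle a)"
proof (induction a)
  case 0 show ?case unfolding cTri_def using reval_pr0[OF reval_zero] by simp
next
  case (Suc a)
  have "reval (Comp cAdd [Proj 1, Comp Succ [Proj 0]]) [a, triangle a] (triangle a + Suc a)"
    by (rule reval_comp2I[OF reval_proj1 reval_comp1I[OF reval_proj0 reval_succ] reval_add])
  then show ?case unfolding cTri_def
    using reval_prS[OF Suc[unfolded cTri_def]] by simp
qed

definition cPair :: recf where "cPair = Comp cAdd [Comp cTri [cAdd], Proj 0]"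
lemma reval_pair: "reval cPair [a, b] (prod_encode (a, b))"
  unfolding cPair_def prod_encode_def
  by (simp, rule reval_comp2I[OF reval_comp1I[OF reval_add reval_tri] reval_proj0 reval_add])

primrec cConst :: "nat \<Rightarrow> recf" where
  "cConst 0 = Zero" | "cConst (Suc k) = Comp Succ [cConst k]"
lemma reval_const: "reval (cConst k) xs k"
  by (induction k) (auto intro: reval_zero reval_comp1I reval_succ)

definition comp1 :: "(nat \<Rightarrow> nat) \<Rightarrow> bool" where
  "comp1 f \<longleftrightarrow> (\<exists>c. \<forall>x. reval c [x] (f x))"
definition comp2 :: "(nat \<Rightarrow> nat \<Rightarrow> nat) \<Rightarrow> bool" where
  "comp2 F \<longleftrightarrow> (\<exists>c. \<forall>a b. reval c [a, b] (F a b))"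

lemma c2_fst: "comp2 (\<lambda>a b. a)"
  unfolding comp2_def by (auto intro: reval_proj0)
lemma c2_snd: "comp2 (\<lambda>a b. b)"
  unfolding comp2_def by (auto intro: reval_proj1)
lemma c2_const: "comp2 (\<lambda>a b. k)"
  unfolding comp2_def by (auto intro: reval_const)
lemma c2_app2: "comp2 F \<Longrightarrow> comp2 G \<Longrightarrow> comp2 H \<Longrightarrow> comp2 (\<lambda>a b. F (G a b) (H a b))"
  unfolding comp2_def
proof (elim exE)
  fix cF cG cH assume h: "\<forall>a b. reval cF [a, b] (F a b)" "\<forall>a b. reval cG [a, b] (G a b)"
     "\<forall>a b. reval cH [a, b] (H a b)"
  have "reval (Comp cF [cG, cH]) [a, b] (F (G a b) (H a b))" for a b
    using h by (intro reval_comp2I) auto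
  then show "\<exists>c. \<forall>a b. reval c [a, b] (F (G a b) (H a b))" by blast
qed
lemma c2_app1: "comp1 F \<Longrightarrow> comp2 G \<Longrightarrow> comp2 (\<lambda>a b. F (G a b))"
  unfolding comp2_def comp1_def
proof (elim exE)
  fix cF cG assume h: "\<forall>a. reval cF [a] (F a)" "\<forall>a b. reval cG [a, b] (G a b)"
  have "reval (Comp cF [cG]) [a, b] (F (G a b))" for a b
    using h by (intro reval_comp1I) auto
  then show "\<exists>c. \<forall>a b. reval c [a, b] (F (G a b))" by blast
qed
lemma c2_add: "comp2 (+)"
  unfolding comp2_def using reval_add by blast
lemma c2_mul: "comp2 (*)"
  unfolding comp2_def using reval_mul by blast
lemma c2_sub: "comp2 (\<lambda>a b. a - b)"
proof -
  have "reval (Comp cSub [Proj 1, Proj 0]) [a, b] (a - b)" for a b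
    by (rule reval_comp2I[OF reval_proj1 reval_proj0 reval_sub])
  then show ?thesis unfolding comp2_def by blast
qed
lemma c2_pair: "comp2 (\<lambda>a b. prod_encode (a, b))"
  unfolding comp2_def using reval_pair by blast

lemma c1_id: "comp1 (\<lambda>x. x)"
  unfolding comp1_def by (auto intro: reval_proj0)
lemma c1_const: "comp1 (\<lambda>x. k)"
  unfolding comp1_def by (auto intro: reval_const)
lemma c1_app2: "comp2 F \<Longrightarrow> comp1 f \<Longrightarrow> comp1 g \<Longrightarrow> comp1 (\<lambda>x. F (f x) (g x))"
  unfolding comp2_def comp1_def
proof (elim exE)
  fix cF cG cH assume h: "\<forall>a b. reval cF [a, b] (F a b)" "\<forall>a. reval cG [a] (f a)"
     "\<forall>a. reval cH [a] (g a)"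
  have "reval (Comp cF [cG, cH]) [a] (F (f a) (g a))" for a
    using h by (intro reval_comp2I) auto
  then show "\<exists>c. \<forall>a. reval c [a] (F (f a) (g a))" by blast
qed
lemma c1_app1: "comp1 F \<Longrightarrow> comp1 f \<Longrightarrow> comp1 (\<lambda>x. F (f x))"
  unfolding comp1_def
proof (elim exE)
  fix cF cG assume h: "\<forall>a. reval cF [a] (F a)" "\<forall>a. reval cG [a] (f a)"
  have "reval (Comp cF [cG]) [a] (F (f a))" for a
    using h by (intro reval_comp1I) auto
  then show "\<exists>c. \<forall>a. reval c [a] (F (f a))" by blast
qed
lemma c1_tri: "comp1 triangle"
  unfolding comp1_def using reval_tri by blast

lemma c1_iter2:
  assumes "comp2 H" "comp1 f" "comp1 g"
  shows "comp1 (\<lambda>x. ((\<lambda>a. H a x) ^^ (f x)) (g x))"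
proof -
  obtain cH where cH: "\<And>a b. reval cH [a, b] (H a b)" using assms(1) unfolding comp2_def by blast
  obtain cf where cf: "\<And>x. reval cf [x] (f x)" using assms(2) unfolding comp1_def by blast
  obtain cg where cg: "\<And>x. reval cg [x] (g x)" using assms(3) unfolding comp1_def by blast
  define PR where "PR = PrimRec cg (Comp cH [Proj 1, Proj 2])"
  have pr: "reval PR [n, x] (((\<lambda>a. H a x) ^^ n) (g x))" for n x
  proof (induction n)
    case 0 show ?case unfolding PR_def using reval_pr0[OF cg] by simp
  next
    case (Suc n)
    have "reval (Comp cH [Proj 1, Proj 2]) [n, ((\<lambda>a. H a x) ^^ n) (g x), x]
            (H (((\<lambda>a. H a x) ^^ n) (g x)) x)"
      by (rule reval_comp2I[OF reval_proj1 reval_proj2 cH])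
    then show ?case using reval_prS[OF Suc[unfolded PR_def]] unfolding PR_def by simp
  qed
  have "reval (Comp PR [cf, Proj 0]) [x] (((\<lambda>a. H a x) ^^ (f x)) (g x))" for x
    by (rule reval_comp2I[OF cf reval_proj0 pr])
  then show ?thesis unfolding comp1_def by blast
qed

lemma c1_add[intro]: "comp1 f \<Longrightarrow> comp1 g \<Longrightarrow> comp1 (\<lambda>x. f x + g x)"
  using c1_app2[OF c2_add] .
lemma c1_mul[intro]: "comp1 f \<Longrightarrow> comp1 g \<Longrightarrow> comp1 (\<lambda>x. f x * g x)"
  using c1_app2[OF c2_mul] .
lemma c1_sub[intro]: "comp1 f \<Longrightarrow> comp1 g \<Longrightarrow> comp1 (\<lambda>x. f x - g x)"
  using c1_app2[OF c2_sub] .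
lemma c1_pair[intro]: "comp1 f \<Longrightarrow> comp1 g \<Longrightarrow> comp1 (\<lambda>x. prod_encode (f x, g x))"
  using c1_app2[OF c2_pair] .
lemma c1_Suc[intro]: "comp1 f \<Longrightarrow> comp1 (\<lambda>x. Suc (f x))"
  using c1_add[OF _ c1_const[of 1]] by simp
lemma c1_tri'[intro]: "comp1 f \<Longrightarrow> comp1 (\<lambda>x. triangle (f x))"
  using c1_app1[OF c1_tri] .
lemmas [intro] = c1_id c1_const

lemma c2_ops:
  "comp2 F \<Longrightarrow> comp2 G \<Longrightarrow> comp2 (\<lambda>a b. F a b + G a b)"
  "comp2 F \<Longrightarrow> comp2 G \<Longrightarrow> comp2 (\<lambda>a b. F a b - G a b)"
  "comp2 F \<Longrightarrow> comp2 G \<Longrightarrow> comp2 (\<lambda>a b. F a b * G a b)"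
  "comp2 F \<Longrightarrow> comp2 (\<lambda>a b. triangle (F a b))"
     apply (rule c2_app2[OF c2_add], assumption+)
    apply (rule c2_app2[OF c2_sub], assumption+)
   apply (rule c2_app2[OF c2_mul], assumption+)
  apply (rule c2_app1[OF c1_tri], assumption)
  done

definition dstep :: "nat \<Rightarrow> nat \<Rightarrow> nat" where
  "dstep a z = a + (1 - (triangle (Suc a) - z))"

lemma dstep_eq: "dstep a z = (if z < triangle (Suc a) then a else Suc a)"
  unfolding dstep_def by auto

definition droot :: "nat \<Rightarrow> nat" where
  "droot z = ((\<lambda>a. dstep a z) ^^ z) 0"

lemma droot_inv: "triangle (((\<lambda>a. dstep a z) ^^ k) 0) \<le> z \<and>
   (((\<lambda>a. dstep a z) ^^ k) 0 = k \<or> z < triangle (Suc (((\<lambda>a. dstep a z) ^^ k) 0)))"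
proof (induction k)
  case 0 then show ?case by simp
next
  case (Suc k)
  show ?case
    using Suc by (auto simp: dstep_eq simp del: triangle_Suc)
qed

lemma triangle_ge: "n \<le> triangle n"
  by (induction n) auto

lemma droot_prop: "triangle (droot z) \<le> z \<and> z < triangle (Suc (droot z))"
proof -
  have "triangle (Suc z) > z" using triangle_ge[of "Suc z"] by simp
  then show ?thesis using droot_inv[of z z] unfolding droot_def by auto
qed

lemma prod_decode_droot: "prod_decode z = (z - triangle (droot z), droot z - (z - triangle (droot z)))"
proof -
  let ?s = "droot z"
  have a: "triangle ?s \<le> z" "z < triangle ?s + Suc ?s" using droot_prop[of z] by auto
  have "prod_encode (z - triangle ?s, ?s - (z - triangle ?s)) = z"
    using a unfolding prod_encode_def by auto
  then show ?thesis by (metis prod_encode_inverse)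
qed

lemma c1_droot: "comp1 droot"
proof -
  have "comp2 dstep"
    unfolding dstep_def
    by (intro c2_ops c2_fst c2_snd c2_const c2_app2[OF c2_add] c2_app2[OF c2_sub]
          c2_app1[OF c1_tri] c2_app1[OF c1_Suc[OF c1_id]])
  then show ?thesis unfolding droot_def using c1_iter2[OF _ c1_id c1_const] by blast
qed

lemma c1_fst[intro]: "comp1 f \<Longrightarrow> comp1 (\<lambda>x. fst (prod_decode (f x)))"
proof -
  have "comp1 (\<lambda>z. z - triangle (droot z))"
    by (intro c1_sub c1_id c1_tri' c1_app1[OF c1_droot])
  then have "comp1 (\<lambda>z. fst (prod_decode z))" by (simp add: prod_decode_droot)
  then show "comp1 f \<Longrightarrow> comp1 (\<lambda>x. fst (prod_decode (f x)))" using c1_app1 by blast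
qed

lemma c1_snd[intro]: "comp1 f \<Longrightarrow> comp1 (\<lambda>x. snd (prod_decode (f x)))"
proof -
  have "comp1 (\<lambda>z. droot z - (z - triangle (droot z)))"
    by (intro c1_sub c1_id c1_tri' c1_app1[OF c1_droot])
  then have "comp1 (\<lambda>z. snd (prod_decode z))" by (simp add: prod_decode_droot)
  then show "comp1 f \<Longrightarrow> comp1 (\<lambda>x. snd (prod_decode (f x)))" using c1_app1 by blast
qed

lemma comp2_of_comp1:
  assumes "comp1 (\<lambda>p. F (fst (prod_decode p)) (snd (prod_decode p)))"
  shows "comp2 F"
  using c2_app1[OF assms c2_pair] by simp

lemma c1_iter[intro]:
  assumes "comp1 (\<lambda>p. S (fst (prod_decode p)) (snd (prod_decode p)))" "comp1 f" "comp1 g"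
  shows "comp1 (\<lambda>x. ((\<lambda>a. S a x) ^^ (f x)) (g x))"
  using c1_iter2[OF comp2_of_comp1[OF assms(1)] assms(2,3)] .

lemma c1_compose: "comp1 h \<Longrightarrow> comp1 f \<Longrightarrow> comp1 (\<lambda>x. h (f x))"
  using c1_app1 .

lemma c1_compose2: "comp1 (\<lambda>p. F (fst (prod_decode p)) (snd (prod_decode p))) \<Longrightarrow>
   comp1 f \<Longrightarrow> comp1 g \<Longrightarrow> comp1 (\<lambda>x. F (f x) (g x))"
  using c1_app2[OF comp2_of_comp1] by blast

definition compP :: "(nat \<Rightarrow> bool) \<Rightarrow> bool" where
  "compP P \<longleftrightarrow> comp1 (\<lambda>x. if P x then 1 else 0)"

lemma cP_less[intro]: "comp1 f \<Longrightarrow> comp1 g \<Longrightarrow> compP (\<lambda>x. f x < g x)"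
proof -
  assume a: "comp1 f" "comp1 g"
  have "comp1 (\<lambda>x. 1 - (1 - (g x - f x)))" using a by (intro c1_sub c1_const)
  moreover have "(\<lambda>x. 1 - (1 - (g x - f x))) = (\<lambda>x. if f x < g x then 1 else 0)" by auto
  ultimately show ?thesis unfolding compP_def by simp
qed

lemma cP_not[intro]: "compP P \<Longrightarrow> compP (\<lambda>x. \<not> P x)"
proof -
  assume a: "compP P"
  have "comp1 (\<lambda>x. 1 - (if P x then 1 else 0))" using a unfolding compP_def by (intro c1_sub c1_const)
  moreover have "(\<lambda>x. 1 - (if P x then 1 else 0)) = (\<lambda>x. if \<not> P x then 1 else (0::nat))" by auto
  ultimately show ?thesis unfolding compP_def by simp
qed

lemma cP_and[intro]: "compP P \<Longrightarrow> compP Q \<Longrightarrow> compP (\<lambda>x. P x \<and> Q x)"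
proof -
  assume a: "compP P" "compP Q"
  have "comp1 (\<lambda>x. (if P x then 1 else 0) * (if Q x then 1 else 0))" using a unfolding compP_def by (intro c1_mul)
  moreover have "(\<lambda>x. (if P x then 1 else 0) * (if Q x then 1 else 0)) = (\<lambda>x. if P x \<and> Q x then 1 else (0::nat))" by auto
  ultimately show ?thesis unfolding compP_def by simp
qed

lemma cP_or[intro]: "compP P \<Longrightarrow> compP Q \<Longrightarrow> compP (\<lambda>x. P x \<or> Q x)"
proof -
  assume "compP P" "compP Q"
  then have "compP (\<lambda>x. \<not> (\<not> P x \<and> \<not> Q x))" by (intro cP_not cP_and)
  then show ?thesis by simp
qed

lemma cP_le[intro]: "comp1 f \<Longrightarrow> comp1 g \<Longrightarrow> compP (\<lambda>x. f x \<le> g x)"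
proof -
  assume "comp1 f" "comp1 g"
  then have "compP (\<lambda>x. \<not> g x < f x)" by (intro cP_not cP_less)
  then show ?thesis by (simp add: not_less)
qed

lemma cP_eq[intro]: "comp1 f \<Longrightarrow> comp1 g \<Longrightarrow> compP (\<lambda>x. f x = g x)"
proof -
  assume "comp1 f" "comp1 g"
  then have "compP (\<lambda>x. f x \<le> g x \<and> g x \<le> f x)" by (intro cP_and cP_le)
  then show ?thesis by (simp add: order_eq_iff)
qed

lemma cP_const[intro]: "compP (\<lambda>x. b)"
  unfolding compP_def by (cases b) (simp_all add: c1_const)

lemma cP_imp[intro]: "compP P \<Longrightarrow> compP Q \<Longrightarrow> compP (\<lambda>x. P x \<longrightarrow> Q x)"
proof -
  assume "compP P" "compP Q"
  then have "compP (\<lambda>x. \<not> P x \<or> Q x)" by (intro cP_not cP_or)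
  then show ?thesis by simp
qed

lemma c1_if[intro]: "compP P \<Longrightarrow> comp1 f \<Longrightarrow> comp1 g \<Longrightarrow> comp1 (\<lambda>x. if P x then f x else g x)"
proof -
  assume a: "compP P" "comp1 f" "comp1 g"
  have "comp1 (\<lambda>x. (if P x then 1 else 0) * f x + (1 - (if P x then 1 else 0)) * g x)"
    using a unfolding compP_def by (intro c1_add c1_mul c1_sub c1_const)
  moreover have "(\<lambda>x. (if P x then 1 else 0) * f x + (1 - (if P x then 1 else 0)) * g x) =
     (\<lambda>x. if P x then f x else g x)" by auto
  ultimately show ?thesis by simp
qed

lemma compP_compose: "compP P \<Longrightarrow> comp1 f \<Longrightarrow> compP (\<lambda>x. P (f x))"
  unfolding compP_def using c1_app1[of "\<lambda>x. if P x then 1 else 0" f] by simp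

lemma c1_pow[intro]:
  assumes "comp1 f" "comp1 g"
  shows "comp1 (\<lambda>x. f x ^ g x)"
proof -
  have "comp1 (\<lambda>x. ((\<lambda>a. a * f x) ^^ (g x)) 1)"
    using assms by (intro c1_iter c1_mul c1_fst c1_id c1_compose[OF assms(1)] c1_snd c1_const)
  moreover have "((\<lambda>a. a * y) ^^ n) 1 = y ^ n" for y n :: nat
    by (induction n) (auto simp: mult.commute)
  ultimately show ?thesis by simp
qed

lemma c1_sum[intro]:
  assumes "comp1 (\<lambda>p. S (fst (prod_decode p)) (snd (prod_decode p)))" "comp1 f"
  shows "comp1 (\<lambda>x. \<Sum>i<f x. S i x)"
proof -
  let ?st = "\<lambda>a x. prod_encode (Suc (fst (prod_decode a)), snd (prod_decode a) + S (fst (prod_decode a)) x)"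
  have c: "comp1 (\<lambda>x. snd (prod_decode (((\<lambda>a. ?st a x) ^^ (f x)) (prod_encode (0, 0)))))"
    apply (intro c1_snd c1_iter c1_pair c1_Suc c1_fst c1_add c1_id c1_const assms(2))
    apply (rule c1_compose2[OF assms(1)])
     apply (intro c1_fst c1_snd c1_id)+
    done
  have "((\<lambda>a. ?st a x) ^^ n) (prod_encode (0, 0)) = prod_encode (n, \<Sum>i<n. S i x)" for n x
    by (induction n) auto
  then show ?thesis using c by simp
qed

lemma sum_pos_iff_nat: fixes n :: nat shows "(0 < (\<Sum>i<n. if Q i then 1 else (0::nat))) = (\<exists>i<n. Q i)"
  by (induction n) (auto simp: less_Suc_eq)

lemma cP_ex[intro]:
  assumes "compP (\<lambda>p. P (fst (prod_decode p)) (snd (prod_decode p)))" "comp1 f"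
  shows "compP (\<lambda>x. \<exists>i<f x. P i x)"
proof -
  have "comp1 (\<lambda>x. \<Sum>i<f x. if P i x then 1 else 0)"
    using assms unfolding compP_def by (intro c1_sum) simp_all
  then have "compP (\<lambda>x. 0 < (\<Sum>i<f x. if P i x then 1 else (0::nat)))"
    by (intro cP_less c1_const)
  moreover have "(0 < (\<Sum>i<n. if P i x then 1 else (0::nat))) = (\<exists>i<n. P i x)" for n x
    by (rule sum_pos_iff_nat)
  ultimately show ?thesis by simp
qed


lemma cP_all[intro]:
  assumes "compP (\<lambda>p. P (fst (prod_decode p)) (snd (prod_decode p)))" "comp1 f"
  shows "compP (\<lambda>x. \<forall>i<f x. P i x)"
proof -
  have "compP (\<lambda>x. \<not> (\<exists>i<f x. \<not> P i x))"
    using assms by (intro cP_not cP_ex) auto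
  then show ?thesis by simp
qed

definition bmin :: "nat \<Rightarrow> (nat \<Rightarrow> bool) \<Rightarrow> nat" where
  "bmin b P = (if \<exists>i<b. P i then LEAST i. P i else b)"

lemma bmin_iter: "((\<lambda>a. if P a then a else Suc a) ^^ k) 0 = bmin k P"
proof (induction k)
  case 0 then show ?case by (simp add: bmin_def)
next
  case (Suc k)
  show ?case
  proof (cases "\<exists>i<k. P i")
    case True
    then have "P (LEAST i. P i)" by (metis LeastI)
    moreover have "(LEAST i. P i) < k" using True by (meson Least_le order.strict_trans1)
    ultimately show ?thesis using Suc True by (auto simp: bmin_def less_Suc_eq)
  next
    case False
    then have "(LEAST i. P i) = k" if "P k" using that by (metis Least_equality not_less)
    then show ?thesis using Suc False by (auto simp: bmin_def less_Suc_eq)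
  qed
qed

lemma bmin_le: "bmin b P \<le> b"
  unfolding bmin_def by (auto intro: Least_le order.trans)

lemma bmin_P: "\<exists>i<b. P i \<Longrightarrow> P (bmin b P) \<and> bmin b P < b \<and> (\<forall>j<bmin b P. \<not> P j)"
  unfolding bmin_def by (auto intro: LeastI dest: not_less_Least) (meson Least_le order.strict_trans1)

lemma c1_bmin[intro]:
  assumes "compP (\<lambda>p. P (fst (prod_decode p)) (snd (prod_decode p)))" "comp1 f"
  shows "comp1 (\<lambda>x. bmin (f x) (\<lambda>i. P i x))"
proof -
  have "comp1 (\<lambda>x. ((\<lambda>a. if P a x then a else Suc a) ^^ (f x)) 0)"
    using assms by (intro c1_iter c1_if c1_fst c1_Suc c1_id c1_const) auto
  then show ?thesis by (simp add: bmin_iter)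
qed

definition tlc :: "nat \<Rightarrow> nat" where "tlc z = (if z = 0 then 0 else snd (prod_decode (z - 1)))"
definition hdc :: "nat \<Rightarrow> nat" where "hdc z = fst (prod_decode (z - 1))"

lemma tlc_enc[simp]: "tlc (list_encode xs) = list_encode (tl xs)"
  by (cases xs) (auto simp: tlc_def)
lemma hdc_enc[simp]: "hdc (list_encode (x # xs)) = x"
  by (simp add: hdc_def)
lemma tlc_pow: "(tlc ^^ i) (list_encode xs) = list_encode (drop i xs)"
  by (induction i arbitrary: xs) (auto simp: funpow_Suc_right drop_Suc drop_tl)

lemma c1_tlc[intro]: "comp1 f \<Longrightarrow> comp1 (\<lambda>x. tlc (f x))"
  unfolding tlc_def by (intro c1_if c1_snd c1_sub cP_eq c1_const)
lemma c1_hdc[intro]: "comp1 f \<Longrightarrow> comp1 (\<lambda>x. hdc (f x))"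
  unfolding hdc_def by (intro c1_fst c1_sub c1_const)

lemma c1_tlcpow[intro]: "comp1 f \<Longrightarrow> comp1 g \<Longrightarrow> comp1 (\<lambda>x. (tlc ^^ f x) (g x))"
proof -
  assume a: "comp1 f" "comp1 g"
  have "comp1 (\<lambda>x. ((\<lambda>a. tlc a) ^^ f x) (g x))"
    using a by (intro c1_iter c1_tlc c1_fst c1_id)
  then show ?thesis by simp
qed

primrec prIter :: "nat option \<Rightarrow> (nat \<Rightarrow> nat \<Rightarrow> nat option) \<Rightarrow> nat \<Rightarrow> nat option" where
  "prIter a G 0 = a"
| "prIter a G (Suc n) = (case prIter a G n of None \<Rightarrow> None | Some y \<Rightarrow> G n y)"

primrec msr :: "(nat \<Rightarrow> nat option) \<Rightarrow> nat \<Rightarrow> nat \<Rightarrow> nat option" where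
  "msr F m 0 = None"
| "msr F m (Suc k) = (case F m of None \<Rightarrow> None | Some 0 \<Rightarrow> Some m | Some (Suc _) \<Rightarrow> msr F (Suc m) k)"

primrec evalF :: "recf \<Rightarrow> nat \<Rightarrow> nat list \<Rightarrow> nat option" where
  "evalF Zero t xs = Some 0"
| "evalF Succ t xs = (case xs of [] \<Rightarrow> None | x # _ \<Rightarrow> Some (Suc x))"
| "evalF (Proj i) t xs = (if i < length xs then Some (xs ! i) else None)"
| "evalF (Comp f gs) t xs = (let rs = map (\<lambda>g. evalF g t xs) gs in
      if None \<in> set rs then None else evalF f t (map the rs))"
| "evalF (PrimRec f g) t xs = (case xs of [] \<Rightarrow> None
      | n # ys \<Rightarrow> prIter (evalF f t ys) (\<lambda>i y. evalF g t (i # y # ys)) n)"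
| "evalF (Minimise f) t xs = msr (\<lambda>m. evalF f t (m # xs)) 0 t"

lemma msr_sound: "msr F m k = Some n \<Longrightarrow> m \<le> n \<and> F n = Some 0 \<and> (\<forall>j. m \<le> j \<and> j < n \<longrightarrow> (\<exists>y. F j = Some (Suc y)))"
proof (induction k arbitrary: m)
  case 0 then show ?case by simp
next
  case (Suc k)
  show ?case
  proof (cases "F m")
    case None then show ?thesis using Suc.prems by simp
  next
    case (Some v)
    show ?thesis
    proof (cases v)
      case 0 then have "n = m" using Suc.prems Some by simp
      then show ?thesis using Some 0 by auto
    next
      case (Suc w)
      then have "msr F (Suc m) k = Some n" using Suc.prems Some by simp
      then have h: "Suc m \<le> n \<and> F n = Some 0 \<and> (\<forall>j. Suc m \<le> j \<and> j < n \<longrightarrow> (\<exists>y. F j = Some (Suc y)))"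
        by (rule Suc.IH)
      have "\<forall>j. m \<le> j \<and> j < n \<longrightarrow> (\<exists>y. F j = Some (Suc y))"
      proof (intro allI impI)
        fix j assume j: "m \<le> j \<and> j < n"
        show "\<exists>y. F j = Some (Suc y)"
        proof (cases "j = m")
          case True then show ?thesis using Some Suc by simp
        next
          case False then show ?thesis using h j by simp
        qed
      qed
      then show ?thesis using h by simp
    qed
  qed
qed

lemma evalF_sound: "evalF c t xs = Some y \<Longrightarrow> reval c xs y"
proof (induction c arbitrary: xs y)
  case Zero then show ?case by (auto intro: reval_zero)
next
  case Succ then show ?case by (auto split: list.splits intro: reval_succ)
next
  case (Proj i) then show ?case by (auto split: if_splits intro: reval_proj)
next
  case (Comp f gs)
  let ?rs = "map (\<lambda>g. evalF g t xs) gs"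
  have nn: "None \<notin> set ?rs" and ev: "evalF f t (map the ?rs) = Some y"
    using Comp.prems by (auto simp: Let_def split: if_splits)
  show ?case
  proof (rule reval_comp[where ys="map the ?rs"])
    show "length (map the ?rs) = length gs" by simp
    show "reval f (map the ?rs) y" using Comp.IH(1) ev by blast
    show "\<forall>i<length gs. reval (gs ! i) xs (map the ?rs ! i)"
    proof (intro allI impI)
      fix i assume i: "i < length gs"
      have "?rs ! i \<in> set ?rs" using i by (intro nth_mem) simp
      then have "?rs ! i \<noteq> None" using nn by metis
      then have "evalF (gs ! i) t xs \<noteq> None" using i by simp
      then have "evalF (gs ! i) t xs = Some (map the ?rs ! i)" using i by auto
      then show "reval (gs ! i) xs (map the ?rs ! i)" using Comp.IH(2) i by (meson nth_mem)
    qed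
  qed
next
  case (PrimRec f g)
  obtain n ys where xs: "xs = n # ys" using PrimRec.prems by (cases xs) auto
  have "prIter (evalF f t ys) (\<lambda>i y. evalF g t (i # y # ys)) n = Some z \<Longrightarrow> reval (PrimRec f g) (n # ys) z" for z
  proof (induction n arbitrary: z)
    case 0 then show ?case using PrimRec.IH(1) reval_pr0 by simp
  next
    case (Suc n)
    then obtain y' where "prIter (evalF f t ys) (\<lambda>i y. evalF g t (i # y # ys)) n = Some y'"
       "evalF g t (n # y' # ys) = Some z" by (auto split: option.splits)
    then show ?case using Suc.IH PrimRec.IH(2) reval_prS by blast
  qed
  then show ?case using PrimRec.prems xs by simp
next
  case (Minimise f)
  have m: "msr (\<lambda>m. evalF f t (m # xs)) 0 t = Some y" using Minimise.prems by simp
  from msr_sound[OF m]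
  have "evalF f t (y # xs) = Some 0" "\<forall>j<y. \<exists>v. evalF f t (j # xs) = Some (Suc v)" by simp_all
  then have "reval f (y # xs) 0" "\<forall>j<y. \<exists>v. reval f (j # xs) (Suc v)" using Minimise.IH by blast+
  then show ?case by (rule reval_mn)
qed

lemma msr_complete: "m \<le> n \<Longrightarrow> n < m + k \<Longrightarrow> F n = Some 0 \<Longrightarrow>
   (\<forall>j. m \<le> j \<and> j < n \<longrightarrow> (\<exists>y. F j = Some (Suc y))) \<Longrightarrow> msr F m k = Some n"
proof (induction k arbitrary: m)
  case 0 then show ?case by simp
next
  case (Suc k)
  show ?case
  proof (cases "m = n")
    case True then show ?thesis using Suc.prems by simp
  next
    case False
    then have mn: "m < n" using Suc.prems by simp
    then obtain y where y: "F m = Some (Suc y)" using Suc.prems(4) by blast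
    have "msr F (Suc m) k = Some n"
      using mn Suc.prems by (intro Suc.IH) auto
    then show ?thesis using y by simp
  qed
qed

lemma evalF_complete: "reval c xs y \<Longrightarrow> \<exists>t0. \<forall>t\<ge>t0. evalF c t xs = Some y"
proof (induction rule: reval.induct)
  case (reval_zero xs) then show ?case by simp
next
  case (reval_succ x xs) then show ?case by simp
next
  case (reval_proj i xs) then show ?case by simp
next
  case (reval_comp ys gs xs f z)
  have "\<forall>i. \<exists>t0. i < length gs \<longrightarrow> (\<forall>t\<ge>t0. evalF (gs ! i) t xs = Some (ys ! i))"
    using reval_comp.IH(1) by blast
  then obtain T where T: "\<And>i t. i < length gs \<Longrightarrow> t \<ge> T i \<Longrightarrow> evalF (gs ! i) t xs = Some (ys ! i)"
    by metis
  obtain tf where tf: "\<And>t. t \<ge> tf \<Longrightarrow> evalF f t ys = Some z" using reval_comp.IH(2) by blast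
  have "evalF (Comp f gs) t xs = Some z" if t: "t \<ge> tf + (\<Sum>i<length gs. T i)" for t
  proof -
    have "map (\<lambda>g. evalF g t xs) gs = map Some ys"
    proof (rule nth_equalityI)
      show "length (map (\<lambda>g. evalF g t xs) gs) = length (map Some ys)" using reval_comp.hyps by simp
      fix i assume i: "i < length (map (\<lambda>g. evalF g t xs) gs)"
      then have "T i \<le> (\<Sum>i<length gs. T i)" by (intro member_le_sum) auto
      then have "t \<ge> T i" using t by linarith
      then show "map (\<lambda>g. evalF g t xs) gs ! i = map Some ys ! i" using T i reval_comp.hyps by simp
    qed
    then show ?thesis using tf[of t] t by (simp add: Let_def)
  qed
  then show ?case by blast
next
  case (reval_pr0 f xs z g)
  then show ?case by simp
next
  case (reval_prS f g n xs y z)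
  obtain t1 where t1: "\<And>t. t \<ge> t1 \<Longrightarrow> evalF (PrimRec f g) t (n # xs) = Some y" using reval_prS.IH(1) by blast
  obtain t2 where t2: "\<And>t. t \<ge> t2 \<Longrightarrow> evalF g t (n # y # xs) = Some z" using reval_prS.IH(2) by blast
  have "evalF (PrimRec f g) t (Suc n # xs) = Some z" if "t \<ge> t1 + t2" for t
    using t1[of t] t2[of t] that by simp
  then show ?case by blast
next
  case (reval_mn f n xs)
  obtain tn where tn: "\<And>t. t \<ge> tn \<Longrightarrow> evalF f t (n # xs) = Some 0" using reval_mn.IH(1) by blast
  have "\<forall>m. \<exists>t0 y. m < n \<longrightarrow> (\<forall>t\<ge>t0. evalF f t (m # xs) = Some (Suc y))"
    using reval_mn.IH(2) by blast
  then obtain T Y where T: "\<And>m t. m < n \<Longrightarrow> t \<ge> T m \<Longrightarrow> evalF f t (m # xs) = Some (Suc (Y m))"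
    by metis
  have "evalF (Minimise f) t xs = Some n" if t: "t \<ge> tn + (\<Sum>i<n. T i) + Suc n" for t
  proof -
    have "msr (\<lambda>m. evalF f t (m # xs)) 0 t = Some n"
    proof (rule msr_complete)
      show "0 \<le> n" by simp
      show "n < 0 + t" using t by simp
      show "evalF f t (n # xs) = Some 0" using tn t by simp
      show "\<forall>j. 0 \<le> j \<and> j < n \<longrightarrow> (\<exists>y. evalF f t (j # xs) = Some (Suc y))"
      proof (intro allI impI)
        fix j assume j: "0 \<le> j \<and> j < n"
        then have "T j \<le> (\<Sum>i<n. T i)" by (intro member_le_sum) auto
        then have "t \<ge> T j" using t by linarith
        then show "\<exists>y. evalF f t (j # xs) = Some (Suc y)" using T j by blast
      qed
    qed
    then show ?thesis by simp
  qed
  then show ?case by blast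
qed

lemma reval_iff_evalF: "reval c xs y \<longleftrightarrow> (\<exists>t. evalF c t xs = Some y)"
  using evalF_complete evalF_sound by blast

primrec oenc :: "nat option \<Rightarrow> nat" where
  "oenc None = 0" | "oenc (Some y) = Suc y"

definition E :: "recf \<Rightarrow> nat \<Rightarrow> nat" where
  "E c p = oenc (evalF c (fst (prod_decode p)) (list_decode (snd (prod_decode p))))"

lemma E_enc: "E c (prod_encode (t, list_encode xs)) = oenc (evalF c t xs)"
  by (simp add: E_def)

primrec lst :: "recf list \<Rightarrow> nat \<Rightarrow> nat" where
  "lst [] p = 1"
| "lst (g # gs) p = (if E g p = 0 \<or> lst gs p = 0 then 0 else Suc (Suc (prod_encode (E g p - 1, lst gs p - 1))))"

lemma lst_eq: "lst gs (prod_encode (t, list_encode xs)) =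
   (if None \<in> set (map (\<lambda>g. evalF g t xs) gs) then 0 else Suc (list_encode (map the (map (\<lambda>g. evalF g t xs) gs))))"
proof (induction gs)
  case Nil then show ?case by simp
next
  case (Cons g gs)
  show ?case
  proof (cases "evalF g t xs")
    case None then show ?thesis by (simp add: E_enc)
  next
    case (Some v) then show ?thesis using Cons by (auto simp: E_enc)
  qed
qed

lemma c1_lst: "(\<And>g. g \<in> set gs \<Longrightarrow> comp1 (E g)) \<Longrightarrow> comp1 (lst gs)"
proof (induction gs)
  case Nil then show ?case by (simp add: c1_const)
next
  case (Cons g gs)
  have a: "comp1 (E g)" "comp1 (lst gs)" using Cons by auto
  show ?case unfolding lst.simps
    by (intro c1_if cP_or cP_eq c1_Suc c1_pair c1_sub c1_const c1_compose[OF a(1)] c1_compose[OF a(2)] c1_id)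
qed

lemma hdc_Suc[simp]: "hdc (Suc (prod_encode (x, y))) = x" by (simp add: hdc_def)
lemma tlc_Suc[simp]: "tlc (Suc (prod_encode (x, y))) = y" by (simp add: tlc_def)

lemma E_dec: "E c p = oenc (evalF c (fst (prod_decode p)) (list_decode (snd (prod_decode p))))"
  by (simp add: E_def)

lemma list_decode_0_iff: "list_decode z = [] \<longleftrightarrow> z = 0"
  by (metis list_decode.simps(1) list_decode_inverse list_encode.simps(1))

lemma E_Succ: "E Succ p = (if snd (prod_decode p) = 0 then 0 else Suc (Suc (hdc (snd (prod_decode p)))))"
proof -
  obtain xs where xs: "snd (prod_decode p) = list_encode xs" by (metis list_decode_inverse)
  show ?thesis unfolding E_dec xs by (cases xs) auto
qed

lemma E_Proj: "E (Proj i) p = (if (tlc ^^ i) (snd (prod_decode p)) = 0 then 0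
     else Suc (hdc ((tlc ^^ i) (snd (prod_decode p)))))"
proof -
  obtain xs where xs: "snd (prod_decode p) = list_encode xs" by (metis list_decode_inverse)
  have d: "(tlc ^^ i) (list_encode xs) = list_encode (drop i xs)" by (rule tlc_pow)
  show ?thesis
  proof (cases "i < length xs")
    case True
    then obtain y ys where "drop i xs = y # ys" by (metis Cons_nth_drop_Suc)
    moreover have "xs ! i = hd (drop i xs)" using True by (simp add: hd_drop_conv_nth)
    ultimately show ?thesis unfolding E_dec xs d using True by simp
  next
    case False
    then have "drop i xs = []" by simp
    then show ?thesis unfolding E_dec xs d using False by simp
  qed
qed

lemma E_Comp: "E (Comp f gs) p = (if lst gs p = 0 then 0 else E f (prod_encode (fst (prod_decode p), lst gs p - 1)))"
proof -
  obtain t xs where p: "p = prod_encode (t, list_encode xs)"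
    by (metis list_decode_inverse prod_decode_inverse surj_pair)
  show ?thesis unfolding p lst_eq by (simp add: E_enc Let_def)
qed

definition prstep :: "recf \<Rightarrow> nat \<Rightarrow> nat \<Rightarrow> nat" where
  "prstep g p a = prod_encode (Suc (fst (prod_decode a)), if snd (prod_decode a) = 0 then 0 else
     E g (prod_encode (fst (prod_decode p), Suc (prod_encode (fst (prod_decode a),
        Suc (prod_encode (snd (prod_decode a) - 1, tlc (snd (prod_decode p)))))))))"

lemma E_PrimRec: "E (PrimRec f g) p = (if snd (prod_decode p) = 0 then 0 else
   snd (prod_decode (((\<lambda>a. prstep g p a) ^^ (hdc (snd (prod_decode p))))
      (prod_encode (0, E f (prod_encode (fst (prod_decode p), tlc (snd (prod_decode p)))))))))"
proof -
  obtain t xs where p: "p = prod_encode (t, list_encode xs)"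
    by (metis list_decode_inverse prod_decode_inverse surj_pair)
  show ?thesis
  proof (cases xs)
    case Nil then show ?thesis unfolding p using E_enc[of "PrimRec f g" t "[]"] by simp
  next
    case (Cons n ys)
    have it: "((\<lambda>a. prstep g p a) ^^ k) (prod_encode (0, E f (prod_encode (t, list_encode ys)))) =
       prod_encode (k, oenc (prIter (evalF f t ys) (\<lambda>i y. evalF g t (i # y # ys)) k))" for k
    proof (induction k)
      case 0 then show ?case by (simp add: E_enc)
    next
      case (Suc k)
      show ?case
        using Suc unfolding p by (cases "prIter (evalF f t ys) (\<lambda>i y. evalF g t (i # y # ys)) k")
          (simp_all add: prstep_def E_enc[symmetric] Cons)
    qed
    show ?thesis unfolding Cons using it E_enc[of "PrimRec f g" t "n # ys"] unfolding p by (simp add: E_enc Cons)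
  qed
qed

definition mstep :: "recf \<Rightarrow> nat \<Rightarrow> nat \<Rightarrow> nat" where
  "mstep f p a = (if snd (prod_decode a) \<noteq> 0 then a else
     if E f (prod_encode (fst (prod_decode p), Suc (prod_encode (fst (prod_decode a), snd (prod_decode p))))) = 1
     then prod_encode (fst (prod_decode a), 1) else
     if E f (prod_encode (fst (prod_decode p), Suc (prod_encode (fst (prod_decode a), snd (prod_decode p))))) = 0
     then prod_encode (fst (prod_decode a), 2) else prod_encode (Suc (fst (prod_decode a)), 0))"

definition mres :: "nat \<Rightarrow> nat" where
  "mres a = (if snd (prod_decode a) = 1 then Suc (fst (prod_decode a)) else 0)"

lemma mstep_fix: "snd (prod_decode a) \<noteq> 0 \<Longrightarrow> ((\<lambda>a. mstep f p a) ^^ k) a = a"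
  by (induction k) (auto simp: mstep_def)

lemma E_Minimise: "E (Minimise f) p = mres (((\<lambda>a. mstep f p a) ^^ (fst (prod_decode p))) (prod_encode (0, 0)))"
proof -
  obtain t xs where p: "p = prod_encode (t, list_encode xs)"
    by (metis list_decode_inverse prod_decode_inverse surj_pair)
  have it: "mres (((\<lambda>a. mstep f p a) ^^ k) (prod_encode (m, 0))) = oenc (msr (\<lambda>m. evalF f t (m # xs)) m k)" for k m
  proof (induction k arbitrary: m)
    case 0 then show ?case by (simp add: mres_def)
  next
    case (Suc k)
    have fs: "((\<lambda>a. mstep f p a) ^^ Suc k) a = ((\<lambda>a. mstep f p a) ^^ k) (mstep f p a)" for a
      by (simp only: funpow_Suc_right o_apply)
    have eq: "E f (prod_encode (fst (prod_decode p), Suc (prod_encode (m, snd (prod_decode p))))) = oenc (evalF f t (m # xs))"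
      unfolding p using E_enc[of f t "m # xs"] by simp
    show ?case
    proof (cases "evalF f t (m # xs)")
      case None
      then have "mstep f p (prod_encode (m, 0)) = prod_encode (m, 2)" using eq by (simp add: mstep_def)
      then show ?thesis using None mstep_fix[of "prod_encode (m, 2)"] by (simp add: fs mres_def del: funpow.simps)
    next
      case (Some v)
      show ?thesis
      proof (cases v)
        case 0
        then have "mstep f p (prod_encode (m, 0)) = prod_encode (m, 1)" using eq Some by (simp add: mstep_def)
        then show ?thesis using Some 0 mstep_fix[of "prod_encode (m, 1)"] by (simp add: fs mres_def del: funpow.simps)
      next
        case (Suc w)
        then have "mstep f p (prod_encode (m, 0)) = prod_encode (Suc m, 0)" using eq Some by (simp add: mstep_def)
        then show ?thesis using Some Suc Suc.IH by (simp add: fs del: funpow.simps)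
      qed
    qed
  qed
  show ?thesis using it[of t 0] unfolding p by (simp add: E_enc)
qed

lemma c1_E: "comp1 (E c)"
proof (induction c)
  case Zero
  have "E Zero = (\<lambda>p. 1)" by (auto simp: E_def)
  then show ?case by (simp add: c1_const)
next
  case Succ
  show ?case unfolding E_Succ[abs_def]
    by (intro c1_if cP_eq c1_snd c1_id c1_const c1_Suc c1_hdc)
next
  case (Proj i)
  show ?case unfolding E_Proj[abs_def]
    by (intro c1_if cP_eq c1_snd c1_id c1_const c1_Suc c1_hdc c1_tlcpow)
next
  case (Comp f gs)
  have l: "comp1 (lst gs)" using Comp.IH(2) by (intro c1_lst) auto
  show ?case unfolding E_Comp[abs_def]
    by (intro c1_if cP_eq c1_const c1_compose[OF Comp.IH(1)] c1_compose[OF l] c1_pair c1_fst c1_sub c1_id)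
next
  case (PrimRec f g)
  show ?case unfolding E_PrimRec[abs_def] prstep_def
    by (intro c1_if cP_eq c1_snd c1_fst c1_const c1_id c1_iter c1_pair c1_Suc c1_hdc c1_tlc c1_sub
         c1_compose[OF PrimRec.IH(1)] c1_compose[OF PrimRec.IH(2)])
next
  case (Minimise f)
  show ?case unfolding E_Minimise[abs_def] mstep_def mres_def
    by (intro c1_if cP_eq cP_not c1_snd c1_fst c1_const c1_id c1_iter c1_pair c1_Suc
         c1_compose[OF Minimise.IH])
qed

lemma enc_bounds: "2 ^ length s \<le> str_enc s + 1 \<and> str_enc s + 1 < 2 ^ Suc (length s)"
  by (induction s) auto

lemma inj_enc: "inj str_enc"
proof (rule injI)
  fix x y show "str_enc x = str_enc y \<Longrightarrow> x = y"
  proof (induction x arbitrary: y)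
    case Nil then show ?case by (cases y) (auto split: if_splits)
  next
    case (Cons a x)
    then show ?case by (cases y) (auto split: if_splits, presburger+)
  qed
qed

lemma surj_enc: "surj str_enc"
proof -
  have "\<exists>s. str_enc s = n" for n
  proof (induction n rule: less_induct)
    case (less n)
    show ?case
    proof (cases n)
      case 0 then show ?thesis by (intro exI[of _ "[]"]) simp
    next
      case (Suc m)
      obtain s where s: "str_enc s = m div 2" using less Suc by (metis div_le_dividend le_imp_less_Suc)
      show ?thesis
      proof (cases "even m")
        case True then show ?thesis using s Suc by (intro exI[of _ "False # s"]) auto
      next
        case False then have "str_enc (True # s) = n" using s Suc by simp
        then show ?thesis by blast
      qed
    qed
  qed
  then show ?thesis by (metis surjI)
qed

lemma bij_enc: "bij str_enc" using inj_enc surj_enc by (rule bijI)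

lemma inv_enc_enc[simp]: "inv str_enc (str_enc s) = s"
  by (simp add: inj_enc)
lemma enc_inv_enc[simp]: "str_enc (inv str_enc n) = n"
  by (simp add: surj_enc surj_f_inv_f)
lemma enc_eq_iff[simp]: "str_enc x = str_enc y \<longleftrightarrow> x = y"
  using inj_enc by (simp add: inj_eq)

lemma len_unique: "2 ^ L \<le> str_enc s + 1 \<Longrightarrow> str_enc s + 1 < 2 ^ Suc L \<Longrightarrow> length s = L"
proof -
  assume a: "2 ^ L \<le> str_enc s + 1" "str_enc s + 1 < 2 ^ Suc L"
  have b: "2 ^ length s \<le> str_enc s + 1" "str_enc s + 1 < 2 ^ Suc (length s)" using enc_bounds by auto
  have "L < Suc (length s)" using a(1) b(2) by (metis le_less_trans nat_power_less_imp_less zero_less_numeral)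
  moreover have "length s < Suc L" using b(1) a(2) by (metis le_less_trans nat_power_less_imp_less zero_less_numeral)
  ultimately show ?thesis by simp
qed

definition lenc :: "nat \<Rightarrow> nat" where
  "lenc c = bmin (Suc c) (\<lambda>L. c + 1 < 2 ^ Suc L)"

lemma lenc_enc[simp]: "lenc (str_enc s) = length s"
proof -
  let ?c = "str_enc s"
  have ex: "\<exists>i<Suc ?c. ?c + 1 < 2 ^ Suc i"
  proof (intro exI conjI)
    show "?c + 1 < 2 ^ Suc (length s)" using enc_bounds by auto
    have "length s < 2 ^ length s" by simp
    then show "length s < Suc ?c" using enc_bounds[of s] by linarith
  qed
  from bmin_P[OF ex] have h: "?c + 1 < 2 ^ Suc (lenc ?c)" "\<forall>j<lenc ?c. \<not> ?c + 1 < 2 ^ Suc j"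
    unfolding lenc_def by auto
  have "2 ^ lenc ?c \<le> ?c + 1"
  proof (cases "lenc ?c")
    case 0 then show ?thesis by simp
  next
    case (Suc j) then show ?thesis using h(2) by (simp add: not_less)
  qed
  then show ?thesis using len_unique h(1) by metis
qed

lemma lenc_code: "2 ^ L \<le> c + 1 \<Longrightarrow> c + 1 < 2 ^ Suc L \<Longrightarrow> length (inv str_enc c) = L"
  using len_unique[of L "inv str_enc c"] by simp

lemma c1_lenc0: "comp1 lenc"
proof -
  have "comp1 (\<lambda>x. bmin (Suc x) (\<lambda>L. x + 1 < 2 ^ Suc L))"
    by (intro c1_bmin cP_less c1_add c1_pow c1_Suc c1_fst c1_snd c1_id c1_const)
  then show ?thesis unfolding lenc_def[abs_def] .
qed
lemmas c1_lenc[intro] = c1_compose[OF c1_lenc0]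

lemma div_bmin: "0 < g \<Longrightarrow> bmin (Suc f) (\<lambda>q. f < (q + 1) * g) = f div (g::nat)"
proof -
  assume g: "0 < g"
  have "f \<le> f * g" using g by simp
  moreover have "(f + 1) * g = f * g + g" by simp
  ultimately have "f < (f + 1) * g" using g by linarith
  then have ex: "\<exists>i<Suc f. f < (i + 1) * g" by blast
  from bmin_P[OF ex] have h: "f < (bmin (Suc f) (\<lambda>q. f < (q + 1) * g) + 1) * g"
    "\<forall>j<bmin (Suc f) (\<lambda>q. f < (q + 1) * g). \<not> f < (j + 1) * g" by auto
  let ?q = "bmin (Suc f) (\<lambda>q. f < (q + 1) * g)"
  have a: "f < (f div g + 1) * g" using g by (metis add.commute dividend_less_div_times mult.commute mult_Suc_right plus_1_eq_Suc)
  have "\<not> f div g < ?q" using h(2) a by blast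
  moreover have "\<not> ?q < f div g"
  proof
    assume "?q < f div g"
    then have "(?q + 1) * g \<le> (f div g) * g" by (intro mult_le_mono1) simp
    also have "\<dots> \<le> f" by (simp add: div_times_less_eq_dividend)
    finally show False using h(1) by simp
  qed
  ultimately show ?thesis by simp
qed

lemma c1_div[intro]: "comp1 f \<Longrightarrow> comp1 g \<Longrightarrow> comp1 (\<lambda>x. f x div g x)"
proof -
  assume a: "comp1 f" "comp1 g"
  have "comp1 (\<lambda>x. if g x = 0 then 0 else bmin (Suc (f x)) (\<lambda>q. f x < (q + 1) * g x))"
    by (intro c1_if cP_eq c1_bmin cP_less c1_mul c1_add c1_Suc c1_fst c1_snd c1_const c1_id
        c1_compose[OF a(1)] c1_compose[OF a(2)] a)
  moreover have "(\<lambda>x. if g x = 0 then 0 else bmin (Suc (f x)) (\<lambda>q. f x < (q + 1) * g x)) = (\<lambda>x. f x div g x)"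
    using div_bmin by (auto simp: fun_eq_iff)
  ultimately show ?thesis by simp
qed

lemma c1_mod[intro]: "comp1 f \<Longrightarrow> comp1 g \<Longrightarrow> comp1 (\<lambda>x. f x mod g x)"
proof -
  assume a: "comp1 f" "comp1 g"
  have "comp1 (\<lambda>x. f x - g x * (f x div g x))" using a by (intro c1_sub c1_mul c1_div)
  then show ?thesis by (simp add: minus_mult_div_eq_mod)
qed

definition valstep :: "nat \<Rightarrow> nat" where
  "valstep a = (if fst (prod_decode a) = 0 then a else
     prod_encode ((fst (prod_decode a) - 1) div 2, 2 * snd (prod_decode a) + (fst (prod_decode a) - 1) mod 2))"

definition valc :: "nat \<Rightarrow> nat" where
  "valc c = snd (prod_decode ((valstep ^^ c) (prod_encode (c, 0))))"

definition bval :: "nat \<Rightarrow> bool list \<Rightarrow> nat" where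
  "bval acc xs = foldl (\<lambda>acc b. 2 * acc + (if b then 1 else 0)) acc xs"

lemma valstep_iter: "length xs \<le> k \<Longrightarrow> (valstep ^^ k) (prod_encode (str_enc xs, acc)) = prod_encode (0, bval acc xs)"
proof (induction xs arbitrary: acc k)
  case Nil
  have "(valstep ^^ k) (prod_encode (0, acc)) = prod_encode (0, acc)" for k
    by (induction k) (auto simp: valstep_def)
  then show ?case by (simp add: bval_def)
next
  case (Cons b xs)
  then obtain k' where k: "k = Suc k'" "length xs \<le> k'" by (cases k) auto
  have st: "valstep (prod_encode (str_enc (b # xs), acc)) = prod_encode (str_enc xs, 2 * acc + (if b then 1 else 0))"
    by (auto simp: valstep_def)
  have "(valstep ^^ k) (prod_encode (str_enc (b # xs), acc)) = (valstep ^^ k') (valstep (prod_encode (str_enc (b # xs), acc)))"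
    unfolding k by (simp only: funpow_Suc_right o_apply)
  also have "\<dots> = prod_encode (0, bval (2 * acc + (if b then 1 else 0)) xs)" unfolding st by (rule Cons.IH[OF k(2)])
  finally show ?case by (simp add: bval_def)
qed

lemma valc_enc: "valc (str_enc xs) = bval 0 xs"
proof -
  have "length xs \<le> str_enc xs" using enc_bounds[of xs] by (metis Suc_eq_plus1 Suc_le_eq le_trans less_exp not_less_eq_eq)
  then show ?thesis unfolding valc_def using valstep_iter by simp
qed

lemma c1_valc0: "comp1 valc"
  unfolding valc_def[abs_def] valstep_def
  by (intro c1_snd c1_iter c1_if cP_eq c1_fst c1_pair c1_div c1_mod c1_add c1_mul c1_sub c1_id c1_const)

lemmas c1_valc[intro] = c1_compose[OF c1_valc0]

inductive_cases reval_CompE: "reval (Comp f gs) xs z"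

lemma comp1_total: "total_recursive g \<Longrightarrow> comp1 g"
  unfolding total_recursive_def partial_recursive_def comp1_def by auto

lemma pr_graph: "partial_recursive \<phi> \<Longrightarrow>
  \<exists>c. \<forall>x y. \<phi> x = Some y \<longleftrightarrow> (\<exists>t. E c (prod_encode (t, Suc (prod_encode (x, 0)))) = Suc y)"
proof -
  assume "partial_recursive \<phi>"
  then obtain c where c: "\<And>x y. \<phi> x = Some y \<longleftrightarrow> reval c [x] y" unfolding partial_recursive_def by blast
  have "E c (prod_encode (t, Suc (prod_encode (x, 0)))) = oenc (evalF c t [x])" for t x
    using E_enc[of c t "[x]"] by simp
  then have "\<phi> x = Some y \<longleftrightarrow> (\<exists>t. E c (prod_encode (t, Suc (prod_encode (x, 0)))) = Suc y)" for x y
    unfolding c reval_iff_evalF by (metis oenc.simps(1) oenc.simps(2) nat.distinct(1) nat.inject not_None_eq)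
  then show ?thesis by blast
qed

lemma pr_search:
  assumes hQ: "comp1 (\<lambda>p. Q (fst (prod_decode p)) (snd (prod_decode p)))"
    and hO: "comp1 (\<lambda>p. Out (fst (prod_decode p)) (snd (prod_decode p)))"
  shows "partial_recursive (\<lambda>x. if \<exists>w. Q x w = 0 then Some (Out x (LEAST w. Q x w = 0)) else None)"
proof -
  have "comp1 (\<lambda>p. Q (snd (prod_decode p)) (fst (prod_decode p)))"
    by (intro c1_compose2[OF hQ] c1_snd c1_fst c1_id)
  then have "comp2 (\<lambda>w x. Q x w)" by (rule comp2_of_comp1)
  then obtain cQ where cQ: "\<And>w x. reval cQ [w, x] (Q x w)" unfolding comp2_def by blast
  obtain cO where cO: "\<And>a b. reval cO [a, b] (Out a b)" using comp2_of_comp1[OF hO] unfolding comp2_def by blast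
  let ?c = "Comp cO [Proj 0, Minimise cQ]"
  have "reval ?c [x] z \<longleftrightarrow> (\<exists>w. Q x w = 0) \<and> z = Out x (LEAST w. Q x w = 0)" for x z
  proof
    assume r: "reval ?c [x] z"
    obtain ys where ys0: "length ys = length [Proj 0, Minimise cQ]"
      "\<forall>i<length [Proj 0, Minimise cQ]. reval ([Proj 0, Minimise cQ] ! i) [x] (ys ! i)" "reval cO ys z"
      using r by (rule reval_CompE)
    have ys: "length ys = 2" "reval (Proj 0) [x] (ys ! 0)" "reval (Minimise cQ) [x] (ys ! 1)" "reval cO ys z"
      using ys0 by auto
    have y0: "ys ! 0 = x" using reval_det[OF reval_proj0 ys(2)] by simp
    obtain n where n: "ys ! 1 = n" by blast
    have q0: "Q x n = 0" using ys(3) n by (auto elim!: reval_MinE dest: reval_det[OF cQ])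
    have qm: "Q x m \<noteq> 0" if "m < n" for m
    proof -
      have "\<exists>y. reval cQ [m, x] (Suc y)" using ys(3) n that by (auto elim!: reval_MinE)
      then show ?thesis using reval_det[OF cQ] by fastforce
    qed
    have ln: "(LEAST w. Q x w = 0) = n" using q0 qm by (metis (mono_tags, lifting) Least_equality not_less)
    have "ys = [x, n]" using ys(1) y0 n by (cases ys; cases "tl ys") auto
    then have "z = Out x n" using reval_det[OF cO ys(4)[unfolded \<open>ys = [x, n]\<close>]] by simp
    then show "(\<exists>w. Q x w = 0) \<and> z = Out x (LEAST w. Q x w = 0)" using q0 ln by auto
  next
    assume a: "(\<exists>w. Q x w = 0) \<and> z = Out x (LEAST w. Q x w = 0)"
    let ?n = "LEAST w. Q x w = 0"
    have q0: "Q x ?n = 0" using a by (metis (mono_tags, lifting) LeastI)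
    have qm: "\<forall>m<?n. \<exists>y. reval cQ (m # [x]) (Suc y)"
    proof (intro allI impI)
      fix m assume "m < ?n"
      then have "Q x m \<noteq> 0" using not_less_Least by blast
      then obtain y where "Q x m = Suc y" by (cases "Q x m") auto
      then show "\<exists>y. reval cQ (m # [x]) (Suc y)" using cQ[of m x] by auto
    qed
    have "reval (Minimise cQ) [x] ?n" using cQ[of ?n x] q0 qm by (intro reval_mn) auto
    then show "reval ?c [x] z" using a cO by (intro reval_comp2I[OF reval_proj0]) auto
  qed
  then show ?thesis unfolding partial_recursive_def by (intro exI[of _ ?c]) auto
qed

lemma pr_bind: "partial_recursive \<phi> \<Longrightarrow> partial_recursive \<psi> \<Longrightarrow> partial_recursive (\<lambda>x. Option.bind (\<phi> x) \<psi>)"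
proof -
  assume "partial_recursive \<phi>" "partial_recursive \<psi>"
  then obtain c1 c2 where c1: "\<And>x y. \<phi> x = Some y \<longleftrightarrow> reval c1 [x] y" and c2: "\<And>x y. \<psi> x = Some y \<longleftrightarrow> reval c2 [x] y"
    unfolding partial_recursive_def by blast
  have "Option.bind (\<phi> x) \<psi> = Some z \<longleftrightarrow> reval (Comp c2 [c1]) [x] z" for x z
  proof
    assume "Option.bind (\<phi> x) \<psi> = Some z"
    then obtain y where "\<phi> x = Some y" "\<psi> y = Some z" by (cases "\<phi> x") auto
    then show "reval (Comp c2 [c1]) [x] z" using c1 c2 by (intro reval_comp1I) auto
  next
    assume "reval (Comp c2 [c1]) [x] z"
    then obtain ys where ys0: "length ys = length [c1]" "\<forall>i<length [c1]. reval ([c1] ! i) [x] (ys ! i)" "reval c2 ys z"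
      by (rule reval_CompE)
    then have ys: "length ys = 1" "reval c1 [x] (ys ! 0)" "reval c2 ys z" by auto
    then have "ys = [ys ! 0]" by (cases ys) auto
    then show "Option.bind (\<phi> x) \<psi> = Some z" using ys c1 c2 by (metis bind.simps(2))
  qed
  then show ?thesis unfolding partial_recursive_def by blast
qed

lemma pr_str: "partial_recursive \<phi> \<Longrightarrow> partial_recursive_str (\<lambda>p. map_option (inv str_enc) (\<phi> (str_enc p)))"
  unfolding partial_recursive_str_def by (simp add: option.map_comp comp_def option.map_ident)

lemma Hc_le: "C q = Some s \<Longrightarrow> Hc C s \<le> enat (length q)"
  unfolding Hc_def by (rule INF_lower) simp

lemma Hc_attained: "Hc C s = enat k \<Longrightarrow> \<exists>q. C q = Some s \<and> length q = k"
proof -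
  assume h: "Hc C s = enat k"
  have ne: "{p. C p = Some s} \<noteq> {}"
  proof
    assume "{p. C p = Some s} = {}"
    then have "Hc C s = \<infinity>" unfolding Hc_def by (simp add: top_enat_def)
    then show False using h by simp
  qed
  have "Hc C s \<in> (\<lambda>p. enat (length p)) ` {p. C p = Some s}"
    unfolding Hc_def Inf_enat_def using ne by (auto intro: LeastI)
  then show ?thesis using h by auto
qed

lemma enc_rep0: "str_enc (replicate m False) + 1 = 2 ^ m"
  by (induction m) auto

lemma enc_rep01: "str_enc (replicate k False @ [True]) + 1 = 3 * 2 ^ k"
  by (induction k) auto

lemma rep_app_eq: "replicate k False @ True # q = replicate j False @ [True] \<Longrightarrow> q = []"
proof (induction k arbitrary: j)
  case 0 then show ?case by (cases j) auto
next
  case (Suc k) then show ?case by (cases j) auto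
qed

definition Q0 :: "nat \<Rightarrow> nat \<Rightarrow> nat" where "Q0 x w = (if x + 1 = 3 * 2 ^ w then 0 else 1)"
definition O0 :: "nat \<Rightarrow> nat \<Rightarrow> nat" where "O0 x w = 4 ^ w - 1"
definition phi0 :: "nat \<Rightarrow> nat option" where
  "phi0 x = (if \<exists>w. Q0 x w = 0 then Some (O0 x (LEAST w. Q0 x w = 0)) else None)"
definition M0 :: "bool list \<Rightarrow> bool list option" where
  "M0 p = map_option (inv str_enc) (phi0 (str_enc p))"

lemma pr_phi0: "partial_recursive phi0"
  unfolding phi0_def[abs_def]
  by (rule pr_search; unfold Q0_def O0_def;
      intro c1_if cP_eq c1_add c1_mul c1_pow c1_sub c1_fst c1_snd c1_id c1_const)

lemma M0_rep: "M0 (replicate k False @ [True]) = Some (replicate (2 * k) False)"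
proof -
  let ?x = "str_enc (replicate k False @ [True])"
  have q: "Q0 ?x w = 0 \<longleftrightarrow> w = k" for w
    unfolding Q0_def using enc_rep01[of k] by auto
  then have "(LEAST w. Q0 ?x w = 0) = k" by (intro Least_equality) auto
  moreover have "O0 ?x k = str_enc (replicate (2 * k) False)"
    unfolding O0_def using enc_rep0[of "2 * k"] by (simp add: power_mult)
  ultimately show ?thesis unfolding M0_def phi0_def using q by auto
qed

lemma M0_dom: "M0 p \<noteq> None \<Longrightarrow> \<exists>k. p = replicate k False @ [True]"
proof -
  assume "M0 p \<noteq> None"
  then obtain w where "str_enc p + 1 = 3 * 2 ^ w" unfolding M0_def phi0_def Q0_def by (auto split: if_splits)
  then have "str_enc p + 1 = str_enc (replicate w False @ [True]) + 1" using enc_rep01[of w] by linarith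
  then have "str_enc p = str_enc (replicate w False @ [True])" by (simp only: add_right_cancel)
  then show ?thesis using enc_eq_iff by blast
qed

lemma pfm_M0: "prefix_free_machine M0"
  unfolding prefix_free_machine_def
proof
  show "partial_recursive_str M0" unfolding M0_def[abs_def] by (rule pr_str[OF pr_phi0])
  show "prefix_free (dom M0)" unfolding prefix_free_def
  proof (intro ballI allI impI)
    fix p q assume p: "p \<in> dom M0" and pq: "p @ q \<in> dom M0"
    obtain k where k: "p = replicate k False @ [True]" using p M0_dom by auto
    obtain j where j: "p @ q = replicate j False @ [True]" using pq M0_dom by auto
    show "q = []" using j unfolding k by (intro rep_app_eq[of k _ j]) simp
  qed
qed

lemma A_nonempty: "optimal_machine V \<Longrightarrow> \<exists>s. Hc V s < enat (length s)"
proof -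
  assume "optimal_machine V"
  then obtain d where d: "\<forall>p\<in>dom M0. \<exists>q\<in>dom V. V q = M0 p \<and> length q \<le> length p + d"
    using pfm_M0 unfolding optimal_machine_def by blast
  let ?p = "replicate (d + 2) False @ [True]"
  have "?p \<in> dom M0" by (simp only: domIff M0_rep) simp
  then obtain q where q: "V q = M0 ?p" "length q \<le> length ?p + d" using d by blast
  then have "V q = Some (replicate (2 * (d + 2)) False)" using M0_rep[of "d + 2"] by simp
  then have "Hc V (replicate (2 * (d + 2)) False) \<le> enat (length q)" by (rule Hc_le)
  also have "\<dots> < enat (length (replicate (2 * (d + 2)) False))" using q(2) by simp
  finally show ?thesis by blast
qed

definition gT :: "real \<Rightarrow> bool list \<Rightarrow> real" where
  "gT T s = 2 powr (- real (length s) / T)"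

lemma gT_pos: "0 < gT T s" by (simp add: gT_def)

lemma finite_len_eq: "finite {s :: bool list. length s = l}"
  using finite_lists_length_eq[of "UNIV :: bool set" l] by simp

lemma card_len_eq: "card {s :: bool list. length s = l} = 2 ^ l"
  using card_lists_length_eq[of "UNIV :: bool set" l] by simp

lemma finite_len_less: "finite {s :: bool list. length s < m}"
proof -
  have "{s :: bool list. length s < m} = (\<Union>l<m. {s. length s = l})" by auto
  then show ?thesis using finite_len_eq by simp
qed

lemma sum_len_less: "(\<Sum>s\<in>{s :: bool list. length s < m}. h (length s)) = (\<Sum>l<m. 2 ^ l * (h l :: real))"
proof (induction m)
  case 0 then show ?case by simp
next
  case (Suc m)
  have "{s :: bool list. length s < Suc m} = {s :: bool list. length s < m} \<union> {s :: bool list. length s = m}" by auto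
  then have "(\<Sum>s\<in>{s :: bool list. length s < Suc m}. h (length s)) =
     (\<Sum>s\<in>{s :: bool list. length s < m}. h (length s)) + (\<Sum>s\<in>{s :: bool list. length s = m}. h (length s))"
    using finite_len_less finite_len_eq by (simp add: sum.union_disjoint disjoint_iff)
  also have "(\<Sum>s\<in>{s :: bool list. length s = m}. h (length s)) = 2 ^ m * h m"
    using card_len_eq[of m] by simp
  finally show ?case using Suc by simp
qed

lemma sum_len_bound:
  fixes F :: "bool list set"
  assumes F: "finite F" and h: "\<And>l. 0 \<le> h l" and sm: "summable (\<lambda>l. 2 ^ l * (h l :: real))"
  shows "(\<Sum>s\<in>F. h (length s)) \<le> (\<Sum>l. 2 ^ l * h l)"
proof -
  obtain m where m: "\<forall>s\<in>F. length s < m"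
    using F by (metis finite_nat_set_iff_bounded finite_imageI imageI)
  have "(\<Sum>s\<in>F. h (length s)) \<le> (\<Sum>s\<in>{s :: bool list. length s < m}. h (length s))"
    by (rule sum_mono2[OF finite_len_less]) (use m h in auto)
  also have "\<dots> = (\<Sum>l<m. 2 ^ l * h l)" by (rule sum_len_less)
  also have "\<dots> \<le> (\<Sum>l. 2 ^ l * h l)" using sm h by (intro sum_le_suminf) auto
  finally show ?thesis .
qed

lemma geo_eq: "2 ^ l * 2 powr (- real l / T) = (2 powr (1 - 1 / T)) ^ l"
proof -
  have "(2 powr (1 - 1 / T)) ^ l = 2 powr (real l * (1 - 1 / T))"
    by (simp add: powr_realpow[symmetric] powr_powr mult.commute)
  also have "\<dots> = 2 powr (real l) * 2 powr (- real l / T)"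
    by (simp add: powr_add[symmetric] algebra_simps)
  finally show ?thesis by (simp add: powr_realpow)
qed

lemma r_less_1: "0 < (T::real) \<Longrightarrow> T < 1 \<Longrightarrow> 2 powr (1 - 1 / T) < 1"
proof -
  assume T: "0 < T" "T < 1"
  then have "1 < 1 / T" by (simp add: less_divide_eq_1_pos)
  then have "1 - 1 / T < 0" by simp
  then show ?thesis by (simp add: powr_less_one)
qed

lemma summable_geo: "0 < T \<Longrightarrow> T < 1 \<Longrightarrow> summable (\<lambda>l. 2 ^ l * 2 powr (- real l / T))"
  unfolding geo_eq using r_less_1 by (intro summable_geometric) auto

lemma summable_ngeo: "0 < T \<Longrightarrow> T < 1 \<Longrightarrow> summable (\<lambda>l. 2 ^ l * (real l * 2 powr (- real l / T)))"
proof -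
  assume T: "0 < T" "T < 1"
  define r where "r = 2 powr (1 - 1 / T)"
  have r: "0 < r" "r < 1" using r_less_1[OF T] by (auto simp: r_def)
  have sr: "norm (sqrt r) < 1" "0 < sqrt r" using r by auto
  have "(\<lambda>n. of_nat n * (sqrt r) ^ n) \<longlonglongrightarrow> 0" by (rule powser_times_n_limit_0[OF sr(1)])
  then have "Bseq (\<lambda>n. real n * (sqrt r) ^ n)" by (intro convergent_imp_Bseq) (auto simp: convergent_def)
  then obtain B where B: "\<And>n. norm (real n * (sqrt r) ^ n) \<le> B" by (meson BseqE)
  have eq: "2 ^ l * (real l * 2 powr (- real l / T)) = (real l * (sqrt r) ^ l) * (sqrt r) ^ l" for l
  proof -
    have "(sqrt r) ^ l * (sqrt r) ^ l = r ^ l" using r by (simp add: power_mult_distrib[symmetric])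
    then show ?thesis using geo_eq[of l T] unfolding r_def[symmetric] by (simp add: algebra_simps)
  qed
  have "summable (\<lambda>l. B * (sqrt r) ^ l)" using sr by (intro summable_mult summable_geometric) simp
  moreover have "norm (2 ^ l * (real l * 2 powr (- real l / T))) \<le> B * (sqrt r) ^ l" for l
    unfolding eq using B[of l] sr by (simp add: abs_mult mult_right_mono)
  ultimately show ?thesis by (rule summable_comparison_test'[where N=0])
qed

lemma Kbound:
  assumes "0 < T'" "T' < 1"
  shows "\<exists>K. \<forall>F. finite F \<longrightarrow> (\<Sum>s\<in>F. real (length s) * gT T' s) \<le> K"
proof (intro exI allI impI)
  fix F :: "bool list set" assume "finite F"
  then show "(\<Sum>s\<in>F. real (length s) * gT T' s) \<le> (\<Sum>l. 2 ^ l * (real l * 2 powr (- real l / T')))"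
    unfolding gT_def using summable_ngeo[OF assms]
    by (intro sum_len_bound[where h = "\<lambda>l. real l * 2 powr (- real l / T')"]) auto
qed

lemma one_minus_pow2: "0 \<le> (y::real) \<Longrightarrow> 1 - 2 powr (- y) \<le> y * ln 2"
proof -
  have "1 + (- y * ln 2) \<le> exp (- y * ln 2)" by (rule exp_ge_add_one_self)
  then show ?thesis by (simp add: powr_def)
qed

lemma term_bound:
  assumes T: "0 < T" "T \<le> u" "u \<le> T'"
  shows "gT u s - gT T s \<le> (u - T) * ln 2 / T\<^sup>2 * (real (length s) * gT T' s)"
proof -
  define l where "l = real (length s)"
  have l: "0 \<le> l" by (simp add: l_def)
  define y where "y = l / T - l / u"
  have u0: "0 < u" using T by simp
  have y_eq: "y = l * (u - T) / (T * u)" unfolding y_def using T u0 by (simp add: field_simps)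
  have y0: "0 \<le> y" unfolding y_eq using T l u0 by simp
  have yb: "y \<le> l * (u - T) / T\<^sup>2"
    unfolding y_eq power2_eq_square using T l u0
    by (intro divide_left_mono mult_left_mono mult_nonneg_nonneg) auto
  have split: "gT T s = 2 powr (- l / u) * 2 powr (- y)"
    unfolding gT_def l_def[symmetric] y_def by (simp add: powr_add[symmetric])
  have "gT u s - gT T s = 2 powr (- l / u) * (1 - 2 powr (- y))"
    unfolding split by (simp add: gT_def l_def algebra_simps)
  also have "\<dots> \<le> 2 powr (- l / T') * (y * ln 2)"
  proof (rule mult_mono)
    have "l / T' \<le> l / u" using T l u0 by (intro divide_left_mono) auto
    then show "2 powr (- l / u) \<le> 2 powr (- l / T')" by simp
    show "1 - 2 powr (- y) \<le> y * ln 2" by (rule one_minus_pow2[OF y0])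
    show "0 \<le> 1 - 2 powr (- y)" using y0 powr_mono[of "-y" 0 2] by simp
  qed (use y0 in auto)
  also have "\<dots> \<le> 2 powr (- l / T') * (l * (u - T) / T\<^sup>2 * ln 2)"
    using yb by (intro mult_left_mono mult_right_mono) auto
  also have "\<dots> = (u - T) * ln 2 / T\<^sup>2 * (real (length s) * gT T' s)"
    by (simp add: gT_def l_def)
  finally show ?thesis .
qed

lemma gT_summable:
  assumes "0 < T" "T < 1"
  shows "gT T summable_on A"
proof (rule nonneg_bdd_above_summable_on)
  show "\<And>x. x \<in> A \<Longrightarrow> 0 \<le> gT T x" using gT_pos less_imp_le by blast
  show "bdd_above (sum (gT T) ` {F. F \<subseteq> A \<and> finite F})"
  proof (rule bdd_aboveI2)
    fix F assume "F \<in> {F. F \<subseteq> A \<and> finite F}"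
    then show "sum (gT T) F \<le> (\<Sum>l. 2 ^ l * 2 powr (- real l / T))"
      unfolding gT_def using summable_geo[OF assms]
      by (intro sum_len_bound[where h = "\<lambda>l. 2 powr (- real l / T)"]) auto
  qed
qed

lemma gT_mono: "0 < T \<Longrightarrow> T \<le> u \<Longrightarrow> gT T s \<le> gT u s"
  unfolding gT_def by (auto intro!: divide_left_mono)

lemma gT_strict: "0 < T \<Longrightarrow> T < u \<Longrightarrow> s \<noteq> [] \<Longrightarrow> gT T s < gT u s"
  unfolding gT_def by (auto intro!: divide_strict_left_mono)

lemma Theta_gap:
  assumes T: "0 < T" "T < u" "u < 1" and s0: "s0 \<in> A" "s0 \<noteq> []"
  shows "infsum (gT T) A + (gT u s0 - gT T s0) \<le> infsum (gT u) A"
proof -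
  have sT: "gT T summable_on A" and su: "gT u summable_on A" using gT_summable T by auto
  have sm: "(\<lambda>s. - gT T s) summable_on A" using sT summable_on_uminus by blast
  have sh: "(\<lambda>s. gT u s + - gT T s) summable_on A" by (rule summable_on_add[OF su sm])
  have "infsum (\<lambda>s. gT T s + (gT u s + - gT T s)) A = infsum (gT T) A + infsum (\<lambda>s. gT u s + - gT T s) A"
    by (rule infsum_add[OF sT sh])
  moreover have "(\<lambda>s. gT T s + (gT u s + - gT T s)) = gT u" by auto
  moreover have "sum (\<lambda>s. gT u s + - gT T s) {s0} \<le> infsum (\<lambda>s. gT u s + - gT T s) A"
    using s0 T gT_mono[of T u] sh
    by (intro finite_sum_le_infsum) auto
  ultimately show ?thesis by simp
qed

lemma infsum_approx:
  assumes "f summable_on A" "0 < (e::real)"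
  shows "\<exists>F. finite F \<and> F \<subseteq> A \<and> infsum f A - e < sum f F"
proof -
  have "(sum f \<longlongrightarrow> infsum f A) (finite_subsets_at_top A)"
    using assms(1) has_sum_def has_sum_infsum by blast
  then have "\<forall>\<^sub>F F in finite_subsets_at_top A. infsum f A - e < sum f F"
    using assms(2) by (intro order_tendstoD) auto
  then show ?thesis unfolding eventually_finite_subsets_at_top by auto
qed

definition runV :: "recf \<Rightarrow> nat \<Rightarrow> nat \<Rightarrow> nat" where
  "runV cV st pc = E cV (prod_encode (st, Suc (prod_encode (pc, 0))))"

definition inA :: "recf \<Rightarrow> nat \<Rightarrow> nat \<Rightarrow> bool" where
  "inA cV st sc \<longleftrightarrow> lenc sc \<le> st \<and> (\<exists>pc < 2 ^ lenc sc - 1. runV cV st pc = Suc sc)"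

definition Jc :: "nat \<Rightarrow> nat \<Rightarrow> nat \<Rightarrow> nat \<Rightarrow> nat" where
  "Jc a b L M = (\<Sum>j::nat < 2 ^ M. if (j + 1) ^ a * 2 ^ (L * b) \<le> 2 ^ (M * a) then 1 else 0)"

definition Sc :: "recf \<Rightarrow> nat \<Rightarrow> nat \<Rightarrow> nat \<Rightarrow> nat \<Rightarrow> nat" where
  "Sc cV a b st M = (\<Sum>sc::nat < 2 ^ Suc st. if inA cV st sc then Jc a b (lenc sc) M else 0)"

definition Qm :: "recf \<Rightarrow> (nat \<Rightarrow> nat) \<Rightarrow> (nat \<Rightarrow> nat) \<Rightarrow> (nat \<Rightarrow> nat) \<Rightarrow> nat \<Rightarrow> nat \<Rightarrow> nat" where
  "Qm cV fa fb fc x w = (if fa (Suc (fst (prod_decode w))) * 2 ^ snd (prod_decode (snd (prod_decode w)))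
       < fb (Suc (fst (prod_decode w))) * 2 ^ snd (prod_decode (snd (prod_decode w)))
         + (fc (Suc (fst (prod_decode w))) + 1) *
           Sc cV (valc x + 1) (2 ^ lenc x) (fst (prod_decode (snd (prod_decode w)))) (snd (prod_decode (snd (prod_decode w))))
      then 0 else 1)"

definition Lout :: "nat \<Rightarrow> nat \<Rightarrow> nat" where
  "Lout e x = (valc x * (lenc x - e)) div 2 ^ lenc x"

definition Om :: "recf \<Rightarrow> nat \<Rightarrow> nat \<Rightarrow> nat \<Rightarrow> nat" where
  "Om cV e x w = 2 ^ Lout e x - 1 + bmin (2 ^ Lout e x) (\<lambda>i. \<not> inA cV (fst (prod_decode (snd (prod_decode w)))) (2 ^ Lout e x - 1 + i))"

lemma c1_runV: "comp1 (\<lambda>p. runV cV (fst (prod_decode p)) (snd (prod_decode p)))"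
  unfolding runV_def by (intro c1_compose[OF c1_E] c1_pair c1_Suc c1_fst c1_snd c1_id c1_const)

lemmas c1_runV' = c1_compose2[OF c1_runV]

lemma cP_inA: "compP (\<lambda>p. inA cV (fst (prod_decode p)) (snd (prod_decode p)))"
  unfolding inA_def
  by (intro cP_and cP_le cP_ex cP_eq c1_lenc c1_fst c1_snd c1_id c1_sub c1_pow c1_const c1_Suc c1_runV')

lemma cP_compose2: "compP (\<lambda>p. F (fst (prod_decode p)) (snd (prod_decode p))) \<Longrightarrow>
   comp1 f \<Longrightarrow> comp1 g \<Longrightarrow> compP (\<lambda>x. F (f x) (g x))"
  unfolding compP_def using c1_compose2[of "\<lambda>a b. if F a b then 1 else 0" f g] by simp

lemmas cP_inA' = cP_compose2[OF cP_inA]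

lemma c1_Sc: "comp1 (\<lambda>p. Sc cV (fst (prod_decode (fst (prod_decode p)))) (snd (prod_decode (fst (prod_decode p))))
   (fst (prod_decode (snd (prod_decode p)))) (snd (prod_decode (snd (prod_decode p)))))"
  unfolding Sc_def Jc_def
  by (intro c1_sum c1_if cP_inA' c1_pow c1_Suc c1_fst c1_snd c1_id c1_const cP_le c1_mul c1_add c1_lenc)

lemma c1_Sc': "comp1 a \<Longrightarrow> comp1 b \<Longrightarrow> comp1 c \<Longrightarrow> comp1 d \<Longrightarrow> comp1 (\<lambda>x. Sc cV (a x) (b x) (c x) (d x))"
  using c1_compose[OF c1_Sc, of "\<lambda>x. prod_encode (prod_encode (a x, b x), prod_encode (c x, d x))"]
  by (simp add: c1_pair)

lemma c1_Qm:
  assumes "comp1 fa" "comp1 fb" "comp1 fc"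
  shows "comp1 (\<lambda>p. Qm cV fa fb fc (fst (prod_decode p)) (snd (prod_decode p)))"
  unfolding Qm_def
  by (intro c1_if cP_less c1_mul c1_add c1_pow c1_compose[OF assms(1)] c1_compose[OF assms(2)] c1_compose[OF assms(3)]
      c1_Sc' c1_Suc c1_fst c1_snd c1_id c1_const c1_valc c1_lenc)

lemma c1_Om: "comp1 (\<lambda>p. Om cV e (fst (prod_decode p)) (snd (prod_decode p)))"
  unfolding Om_def Lout_def
  by (intro c1_add c1_sub c1_bmin cP_not cP_inA' c1_pow c1_div c1_mul c1_valc c1_lenc c1_fst c1_snd c1_id c1_const)

lemma runV_eq: "runV cV t pc = oenc (evalF cV t [pc])"
  unfolding runV_def using E_enc[of cV t "[pc]"] by simp

lemma runV_sound: "runV cV t pc = Suc y \<Longrightarrow> reval cV [pc] y"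
  unfolding runV_eq by (cases "evalF cV t [pc]") (auto intro: evalF_sound)

lemma runV_complete: "reval cV [pc] y \<Longrightarrow> \<exists>t0. \<forall>t\<ge>t0. runV cV t pc = Suc y"
  unfolding runV_eq using evalF_complete by fastforce

definition rep :: "recf \<Rightarrow> (bool list \<Rightarrow> bool list option) \<Rightarrow> bool" where
  "rep cV V \<longleftrightarrow> (\<forall>x y. map_option str_enc (V (inv str_enc x)) = Some y \<longleftrightarrow> reval cV [x] y)"

lemma rep_exists: "partial_recursive_str V \<Longrightarrow> \<exists>cV. rep cV V"
  unfolding partial_recursive_str_def partial_recursive_def rep_def by blast

lemma V_of_runV: "rep cV V \<Longrightarrow> runV cV t pc = Suc sc \<Longrightarrow> V (inv str_enc pc) = Some (inv str_enc sc)"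
proof -
  assume r: "rep cV V" "runV cV t pc = Suc sc"
  then have "map_option str_enc (V (inv str_enc pc)) = Some sc" using runV_sound unfolding rep_def by blast
  then obtain s' where "V (inv str_enc pc) = Some s'" "str_enc s' = sc" by auto
  then show ?thesis by auto
qed

lemma len_lt: "str_enc p < 2 ^ L - 1 \<Longrightarrow> length p < L"
proof -
  assume a: "str_enc p < 2 ^ L - 1"
  have "2 ^ length p \<le> str_enc p + 1" using enc_bounds by auto
  then have "(2::nat) ^ length p < 2 ^ L" using a by linarith
  then show ?thesis by simp
qed

lemma inA_sound: "rep cV V \<Longrightarrow> inA cV st (str_enc s) \<Longrightarrow> Hc V s < enat (length s)"
proof -
  assume r: "rep cV V" and i: "inA cV st (str_enc s)"
  then obtain pc where pc: "pc < 2 ^ length s - 1" "runV cV st pc = Suc (str_enc s)" unfolding inA_def by auto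
  have "V (inv str_enc pc) = Some s" using V_of_runV[OF r pc(2)] by simp
  then have "Hc V s \<le> enat (length (inv str_enc pc))" by (rule Hc_le)
  also have "length (inv str_enc pc) < length s" using pc(1) by (intro len_lt) simp
  finally show ?thesis by simp
qed

lemma inA_complete:
  assumes r: "rep cV V" and F: "finite F" and A: "\<forall>s\<in>F. Hc V s < enat (length s)"
  shows "\<exists>st0. \<forall>st\<ge>st0. \<forall>s\<in>F. inA cV st (str_enc s)"
proof -
  have "\<forall>s\<in>F. \<exists>t0. \<forall>st\<ge>t0. inA cV st (str_enc s)"
  proof
    fix s assume s: "s \<in> F"
    then obtain k where k: "Hc V s = enat k" "k < length s" using A by (cases "Hc V s") auto
    obtain p where p: "V p = Some s" "length p = k" using Hc_attained[OF k(1)] by blast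
    have "reval cV [str_enc p] (str_enc s)" using r p(1) unfolding rep_def by (metis inv_enc_enc option.simps(9))
    then obtain t0 where t0: "\<forall>t\<ge>t0. runV cV t (str_enc p) = Suc (str_enc s)" using runV_complete by blast
    have pc: "str_enc p < 2 ^ length s - 1"
    proof -
      have "str_enc p + 1 < 2 ^ Suc (length p)" using enc_bounds by auto
      also have "(2::nat) ^ Suc (length p) \<le> 2 ^ length s" using p(2) k(2) by (intro power_increasing) auto
      finally show ?thesis by linarith
    qed
    show "\<exists>t0. \<forall>st\<ge>t0. inA cV st (str_enc s)"
      using t0 pc by (intro exI[of _ "t0 + length s"]) (auto simp: inA_def)
  qed
  then obtain \<tau> where \<tau>: "\<forall>s\<in>F. \<forall>st\<ge>\<tau> s. inA cV st (str_enc s)" by metis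
  have "\<forall>st\<ge>(\<Sum>s\<in>F. \<tau> s). \<forall>s\<in>F. inA cV st (str_enc s)"
  proof (intro allI impI ballI)
    fix st s assume st: "(\<Sum>s\<in>F. \<tau> s) \<le> st" and s: "s \<in> F"
    have "\<tau> s \<le> (\<Sum>s\<in>F. \<tau> s)" using F s by (intro member_le_sum) auto
    then show "inA cV st (str_enc s)" using \<tau> s st by auto
  qed
  then show ?thesis by blast
qed

definition Aset :: "recf \<Rightarrow> nat \<Rightarrow> bool list set" where
  "Aset cV st = {s. inA cV st (str_enc s)}"

lemma Aset_finite: "finite (Aset cV st)"
proof -
  have "Aset cV st \<subseteq> {s :: bool list. length s < Suc st}" unfolding Aset_def inA_def by auto
  then show ?thesis using finite_len_less finite_subset by blast
qed

lemma Sc_eq: "real (Sc cV a b st M) = (\<Sum>s\<in>Aset cV st. real (Jc a b (length s) M))"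
proof -
  have "Sc cV a b st M = sum (\<lambda>sc. Jc a b (lenc sc) M) {sc\<in>{..<2 ^ Suc st}. inA cV st sc}"
    unfolding Sc_def by (rule sum.inter_filter[symmetric]) simp
  also have "{sc\<in>{..<2 ^ Suc st}. inA cV st sc} = str_enc ` Aset cV st"
  proof
    show "{sc \<in> {..<2 ^ Suc st}. inA cV st sc} \<subseteq> str_enc ` Aset cV st"
      unfolding Aset_def by (auto intro!: image_eqI[where x = "inv str_enc _"])
    show "str_enc ` Aset cV st \<subseteq> {sc \<in> {..<2 ^ Suc st}. inA cV st sc}"
    proof
      fix sc assume "sc \<in> str_enc ` Aset cV st"
      then obtain s where s: "sc = str_enc s" "inA cV st (str_enc s)" unfolding Aset_def by auto
      have "str_enc s + 1 < 2 ^ Suc (length s)" using enc_bounds by auto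
      also have "(2::nat) ^ Suc (length s) \<le> 2 ^ Suc st" using s(2) unfolding inA_def by (intro power_increasing) auto
      finally show "sc \<in> {sc \<in> {..<2 ^ Suc st}. inA cV st sc}" using s by auto
    qed
  qed
  also have "sum (\<lambda>sc. Jc a b (lenc sc) M) (str_enc ` Aset cV st) = (\<Sum>s\<in>Aset cV st. Jc a b (length s) M)"
    using inj_enc by (subst sum.reindex) (auto intro: inj_on_subset)
  finally show ?thesis by simp
qed

lemma count_floor: "0 \<le> X \<Longrightarrow> real (\<Sum>j<m. if real (j + 1) \<le> X then 1 else (0::nat)) = min (real m) (of_int \<lfloor>X\<rfloor>)"
proof (induction m)
  case 0 then show ?case by simp
next
  case (Suc m)
  have iff: "real (m + 1) \<le> X \<longleftrightarrow> int (m + 1) \<le> \<lfloor>X\<rfloor>" by (simp add: le_floor_iff)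
  show ?case
  proof (cases "real (m + 1) \<le> X")
    case True
    then have "int m + 1 \<le> \<lfloor>X\<rfloor>" using iff by simp
    then have "min (real m) (of_int \<lfloor>X\<rfloor>) = real m" "min (real (Suc m)) (of_int \<lfloor>X\<rfloor>) = real m + 1" by linarith+
    then show ?thesis using Suc True by simp
  next
    case False
    then have "\<lfloor>X\<rfloor> \<le> int m" using iff by simp
    then have "min (real (Suc m)) (of_int \<lfloor>X\<rfloor>) = min (real m) (of_int \<lfloor>X\<rfloor>)" by linarith
    then show ?thesis using Suc False by simp
  qed
qed

lemma cond_iff:
  assumes aa: "0 < aa"
  shows "((j + 1) ^ aa * 2 ^ (L * bb) \<le> (2::nat) ^ (M * aa)) \<longleftrightarrow>
     real (j + 1) \<le> 2 ^ M * 2 powr (- real L * real bb / real aa)"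
proof -
  define X where "X = (2::real) ^ M * 2 powr (- real L * real bb / real aa)"
  have X0: "0 \<le> X" unfolding X_def by simp
  have "X ^ aa = 2 ^ (M * aa) * (2 powr (- real L * real bb / real aa)) ^ aa"
    unfolding X_def by (simp add: power_mult_distrib power_mult)
  also have "(2 powr (- real L * real bb / real aa)) ^ aa = 2 powr (- real L * real bb)"
    using aa by (simp add: powr_realpow[symmetric] powr_powr)
  also have "\<dots> = 1 / 2 ^ (L * bb)" by (simp add: powr_minus powr_realpow[symmetric] divide_inverse)
  finally have Xa: "X ^ aa = 2 ^ (M * aa) / 2 ^ (L * bb)" by simp
  have "((j + 1) ^ aa * 2 ^ (L * bb) \<le> (2::nat) ^ (M * aa)) \<longleftrightarrow>
        real (j + 1) ^ aa * 2 ^ (L * bb) \<le> (2::real) ^ (M * aa)"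
    by (metis (mono_tags, lifting) of_nat_le_iff of_nat_mult of_nat_numeral of_nat_power)
  also have "\<dots> \<longleftrightarrow> real (j + 1) ^ aa \<le> X ^ aa" unfolding Xa by (simp add: pos_le_divide_eq)
  also have "\<dots> \<longleftrightarrow> real (j + 1) \<le> X" using aa X0 by (intro power_mono_iff) auto
  finally show ?thesis unfolding X_def .
qed

lemma Jc_bounds:
  assumes aa: "0 < aa" and bb: "0 < bb"
  shows "real (Jc aa bb (length s) M) \<le> 2 ^ M * gT (real aa / real bb) s \<and>
         2 ^ M * gT (real aa / real bb) s - 1 < real (Jc aa bb (length s) M)"
proof -
  define X where "X = (2::real) ^ M * gT (real aa / real bb) s"
  have gX: "gT (real aa / real bb) s = 2 powr (- real (length s) * real bb / real aa)"
    unfolding gT_def using aa bb by (simp add: field_simps)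
  have X0: "0 \<le> X" unfolding X_def by (simp add: gT_def)
  have g1: "gT (real aa / real bb) s \<le> 1"
    unfolding gX using powr_mono[of "- real (length s) * real bb / real aa" 0 2] by (simp add: divide_nonpos_nonneg)
  then have XM: "X \<le> 2 ^ M" unfolding X_def by simp
  have "Jc aa bb (length s) M = (\<Sum>j<2 ^ M. if real (j + 1) \<le> X then 1 else (0::nat))"
    unfolding Jc_def X_def gX using cond_iff[OF aa] by (intro sum.cong) auto
  then have "real (Jc aa bb (length s) M) = min (real (2 ^ M)) (of_int \<lfloor>X\<rfloor>)"
    using count_floor[OF X0] by simp
  also have "\<dots> = of_int \<lfloor>X\<rfloor>"
  proof -
    have "of_int \<lfloor>X\<rfloor> \<le> X" by (rule of_int_floor_le)
    moreover have "real (2 ^ M) = (2::real) ^ M" by simp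
    ultimately have "of_int \<lfloor>X\<rfloor> \<le> real (2 ^ M)" using XM by linarith
    then show ?thesis by (rule min_absorb2)
  qed
  finally have "real (Jc aa bb (length s) M) = of_int \<lfloor>X\<rfloor>" .
  then show ?thesis unfolding X_def[symmetric] by linarith
qed

lemma floor_double: "2 * \<lfloor>y\<rfloor> \<le> \<lfloor>2 * y\<rfloor> \<and> \<lfloor>2 * y\<rfloor> \<le> 2 * \<lfloor>y\<rfloor> + 1" for y :: real
proof -
  have a: "of_int \<lfloor>y\<rfloor> \<le> y" "y < of_int \<lfloor>y\<rfloor> + 1" by linarith+
  have "2 * \<lfloor>y\<rfloor> \<le> \<lfloor>2 * y\<rfloor>" using a by (simp add: le_floor_iff)
  moreover have "2 * y < of_int (2 * \<lfloor>y\<rfloor> + 2)" using a by linarith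
  then have "\<lfloor>2 * y\<rfloor> < 2 * \<lfloor>y\<rfloor> + 2" by (simp add: floor_less_iff)
  ultimately show ?thesis by simp
qed

lemma bval_snoc: "bval acc (xs @ [b]) = 2 * bval acc xs + (if b then 1 else 0)"
  by (simp add: bval_def)

lemma bval_prefix:
  assumes T: "0 \<le> T" "T < 1"
  shows "int (bval 0 (real_prefix T n)) = \<lfloor>T * 2 ^ n\<rfloor>"
proof (induction n)
  case 0
  then show ?case using T by (simp add: real_prefix_def bval_def floor_eq_iff)
next
  case (Suc n)
  have fr: "frac T = T" using T by (simp add: frac_eq)
  have rp: "real_prefix T (Suc n) = real_prefix T n @ [odd \<lfloor>T * 2 ^ Suc n\<rfloor>]"
    unfolding real_prefix_def fr by simp
  have fd: "2 * \<lfloor>T * 2 ^ n\<rfloor> \<le> \<lfloor>T * 2 ^ Suc n\<rfloor> \<and> \<lfloor>T * 2 ^ Suc n\<rfloor> \<le> 2 * \<lfloor>T * 2 ^ n\<rfloor> + 1"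
    using floor_double[of "T * 2 ^ n"] by (simp add: algebra_simps)
  show ?case
  proof (cases "odd \<lfloor>T * 2 ^ Suc n\<rfloor>")
    case True
    then have "\<lfloor>T * 2 ^ Suc n\<rfloor> = 2 * \<lfloor>T * 2 ^ n\<rfloor> + 1" using fd by presburger
    then show ?thesis unfolding rp bval_snoc using Suc True by simp
  next
    case False
    then have "\<lfloor>T * 2 ^ Suc n\<rfloor> = 2 * \<lfloor>T * 2 ^ n\<rfloor>" using fd by presburger
    then show ?thesis unfolding rp bval_snoc using Suc False by simp
  qed
qed

lemma length_prefix[simp]: "length (real_prefix T n) = n"
  by (simp add: real_prefix_def)

lemma count_exists:
  "\<exists>i<2 ^ L. \<not> inA cV st (2 ^ L - 1 + i)"
proof (rule ccontr)
  assume "\<not> (\<exists>i<2 ^ L. \<not> inA cV st (2 ^ L - 1 + i))"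
  then have all: "\<forall>i<2 ^ L. inA cV st (2 ^ L - 1 + i)" by blast
  have len: "lenc (2 ^ L - 1 + i) = L" if "i < 2 ^ L" for i
  proof -
    have "length (inv str_enc (2 ^ L - 1 + i)) = L" using that by (intro lenc_code) auto
    then show ?thesis by (metis enc_inv_enc lenc_enc)
  qed
  have "\<forall>i. \<exists>pc. i < 2 ^ L \<longrightarrow> pc < 2 ^ L - 1 \<and> runV cV st pc = Suc (2 ^ L - 1 + i)"
  proof
    fix i
    show "\<exists>pc. i < 2 ^ L \<longrightarrow> pc < 2 ^ L - 1 \<and> runV cV st pc = Suc (2 ^ L - 1 + i)"
    proof (cases "i < 2 ^ L")
      case True
      then have "inA cV st (2 ^ L - 1 + i)" using all by blast
      then obtain pc where "pc < 2 ^ lenc (2 ^ L - 1 + i) - 1" "runV cV st pc = Suc (2 ^ L - 1 + i)"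
        unfolding inA_def by blast
      then show ?thesis using len[OF True] by auto
    qed simp
  qed
  from choice[OF this] obtain P where P0: "\<forall>i. i < 2 ^ L \<longrightarrow> P i < 2 ^ L - 1 \<and> runV cV st (P i) = Suc (2 ^ L - 1 + i)"
    by blast
  have P: "P i < 2 ^ L - 1 \<and> runV cV st (P i) = Suc (2 ^ L - 1 + i)" if "i < 2 ^ L" for i
    using P0 that by blast
  have "inj_on P {..<2 ^ L}"
  proof (rule inj_onI)
    fix i j assume ij: "i \<in> {..<2 ^ L}" "j \<in> {..<2 ^ L}" "P i = P j"
    have i: "i < 2 ^ L" and j: "j < 2 ^ L" using ij(1,2) by auto
    have a: "runV cV st (P i) = Suc (2 ^ L - 1 + i)" using conjunct2[OF P[OF i]] .
    have b: "runV cV st (P j) = Suc (2 ^ L - 1 + j)" using conjunct2[OF P[OF j]] .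
    have "Suc (2 ^ L - 1 + i) = Suc (2 ^ L - 1 + j)" using a b ij(3) by metis
    then show "i = j" by linarith
  qed
  moreover have "P ` {..<2 ^ L} \<subseteq> {..<2 ^ L - 1}"
  proof
    fix y assume "y \<in> P ` {..<2 ^ L}"
    then obtain i where "i < 2 ^ L" "y = P i" by blast
    then show "y \<in> {..<2 ^ L - 1}" using P by simp
  qed
  ultimately have "card {..<(2::nat) ^ L} \<le> card {..<(2::nat) ^ L - 1}"
    by (intro card_inj_on_le) simp_all
  then have "(2::nat) ^ L \<le> 2 ^ L - 1" by (simp only: card_lessThan)
  moreover have "(0::nat) < 2 ^ L" by simp
  ultimately show False by linarith
qed

locale setting =
  fixes V :: "bool list \<Rightarrow> bool list option" and cV :: recf and T :: real
    and fa fb fc :: "nat \<Rightarrow> nat"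
  assumes rep: "rep cV V"
    and T0: "0 < T" and T1: "T < 1"
    and cfa: "comp1 fa" and cfb: "comp1 fb" and cfc: "comp1 fc"
    and lim: "(\<lambda>k. (real (fa k) - real (fb k)) / (real (fc k) + 1)) \<longlonglongrightarrow> infsum (gT T) {s. Hc V s < enat (length s)}"
    and up: "\<forall>k\<ge>1. infsum (gT T) {s. Hc V s < enat (length s)} \<le> (real (fa k) - real (fb k)) / (real (fc k) + 1)"
    and nonempty: "\<exists>s. Hc V s < enat (length s)"
begin

definition "A = {s. Hc V s < enat (length s)}"
definition "Th = infsum (gT T) A"
definition "T' = (1 + T) / 2"

lemma T'_props: "T < T'" "T' < 1" "0 < T'" using T0 T1 by (auto simp: T'_def)

definition "K = (SOME K. \<forall>F. finite F \<longrightarrow> (\<Sum>s\<in>F. real (length s) * gT T' s) \<le> K)"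
lemma K: "finite F \<Longrightarrow> (\<Sum>s\<in>F. real (length s) * gT T' s) \<le> K"
  using someI_ex[OF Kbound[OF T'_props(3) T'_props(2)]] unfolding K_def by blast

definition "D = ln 2 / T\<^sup>2 * K"
definition "e = (SOME e::nat. D \<le> 2 ^ e)"
lemma e: "D \<le> 2 ^ e"
proof -
  obtain m :: nat where "D \<le> real m" using real_arch_simple by blast
  moreover have "real m \<le> 2 ^ m"
  proof (induction m)
    case (Suc m)
    have "(1::real) \<le> 2 ^ m" by simp
    moreover have "real (Suc m) = 1 + real m" "(2::real) ^ Suc m = 2 * 2 ^ m" by simp_all
    ultimately show ?case using Suc.IH by linarith
  qed simp
  ultimately have "\<exists>e::nat. D \<le> 2 ^ e" by (intro exI[of _ m]) linarith
  then show ?thesis unfolding e_def by (rule someI_ex)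
qed

lemma A_sub: "inA cV st (str_enc s) \<Longrightarrow> s \<in> A"
  unfolding A_def using inA_sound[OF rep] by blast

lemma sum_A_le: "finite F \<Longrightarrow> F \<subseteq> A \<Longrightarrow> sum (gT T) F \<le> Th"
  unfolding Th_def using gT_summable[OF T0 T1]
  by (intro finite_sum_le_infsum) (auto intro: less_imp_le[OF gT_pos])


definition "xc n = str_enc (real_prefix T n)"
definition "Nv n = valc (xc n)"
definition "uu n = real (Nv n + 1) / 2 ^ n"

lemma lenc_xc[simp]: "lenc (xc n) = n" by (simp add: xc_def)

lemma Nv_bounds: "real (Nv n) \<le> T * 2 ^ n" "T * 2 ^ n < real (Nv n) + 1"
proof -
  have "int (Nv n) = \<lfloor>T * 2 ^ n\<rfloor>" unfolding Nv_def xc_def valc_enc using bval_prefix T0 T1 by simp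
  then have "real (Nv n) = of_int \<lfloor>T * 2 ^ n\<rfloor>" by (metis of_int_of_nat_eq)
  then show "real (Nv n) \<le> T * 2 ^ n" "T * 2 ^ n < real (Nv n) + 1" by linarith+
qed

lemma uu_bounds: "T < uu n" "uu n \<le> T + 1 / 2 ^ n"
proof -
  have p: "(0::real) < 2 ^ n" by simp
  show "T < uu n" unfolding uu_def using Nv_bounds(2)[of n] p by (simp add: field_simps)
  show "uu n \<le> T + 1 / 2 ^ n" unfolding uu_def using Nv_bounds(1)[of n] p by (simp add: field_simps)
qed

definition "n0 = (SOME n0::nat. e \<le> n0 \<and> (\<forall>n\<ge>n0. 1 / 2 ^ n \<le> T' - T))"

lemma n0: "e \<le> n0" "n \<ge> n0 \<Longrightarrow> 1 / 2 ^ n \<le> T' - T"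
proof -
  have d: "0 < T' - T" using T'_props by simp
  obtain m :: nat where m: "1 / (T' - T) \<le> real m" using real_arch_simple by blast
  have "\<forall>n\<ge>m + 1. 1 / 2 ^ n \<le> T' - T"
  proof (intro allI impI)
    fix n :: nat assume n: "m + 1 \<le> n"
    have "real n \<le> 2 ^ n"
    proof (induction n)
      case (Suc n)
      have "(1::real) \<le> 2 ^ n" by simp
      moreover have "real (Suc n) = 1 + real n" "(2::real) ^ Suc n = 2 * 2 ^ n" by simp_all
      ultimately show ?case using Suc.IH by linarith
    qed simp
    then have "1 / (T' - T) \<le> 2 ^ n" using m n by linarith
    then show "1 / 2 ^ n \<le> T' - T" using d by (simp add: field_simps)
  qed
  then have "\<exists>n0::nat. e \<le> n0 \<and> (\<forall>n\<ge>n0. 1 / 2 ^ n \<le> T' - T)"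
    by (intro exI[of _ "max e (m + 1)"]) auto
  from someI_ex[OF this] show "e \<le> n0" "n \<ge> n0 \<Longrightarrow> 1 / 2 ^ n \<le> T' - T" unfolding n0_def by auto
qed

lemma uu_lt: "n \<ge> n0 \<Longrightarrow> uu n \<le> T'" "n \<ge> n0 \<Longrightarrow> uu n < 1"
  using uu_bounds[of n] n0(2)[of n] T'_props by auto

end

context setting
begin

lemma Qm_real:
  assumes "Qm cV fa fb fc (xc n) w = 0"
  shows "(real (fa (Suc (fst (prod_decode w)))) - real (fb (Suc (fst (prod_decode w))))) / (real (fc (Suc (fst (prod_decode w)))) + 1)
     < real (Sc cV (Nv n + 1) (2 ^ n) (fst (prod_decode (snd (prod_decode w)))) (snd (prod_decode (snd (prod_decode w))))) / 2 ^ snd (prod_decode (snd (prod_decode w)))"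
proof -
  define k where "k = Suc (fst (prod_decode w))"
  define M where "M = snd (prod_decode (snd (prod_decode w)))"
  define S where "S = Sc cV (Nv n + 1) (2 ^ n) (fst (prod_decode (snd (prod_decode w)))) M"
  have q: "fa k * 2 ^ M < fb k * 2 ^ M + (fc k + 1) * S"
    using assms unfolding Qm_def k_def M_def S_def Nv_def by (simp split: if_splits)
  then have "real (fa k * 2 ^ M) < real (fb k * 2 ^ M + (fc k + 1) * S)" by (simp only: of_nat_less_iff)
  then have "real (fa k) * 2 ^ M < real (fb k) * 2 ^ M + (real (fc k) + 1) * real S" by (simp add: algebra_simps)
  then have "(real (fa k) - real (fb k)) * 2 ^ M < (real (fc k) + 1) * real S" by (simp add: algebra_simps)
  then have "(real (fa k) - real (fb k)) / (real (fc k) + 1) < real S / 2 ^ M"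
    by (simp add: field_simps)
  then show ?thesis unfolding k_def M_def S_def .
qed

lemma Sc_le:
  assumes "0 < a" "0 < b"
  shows "real (Sc cV a b st M) / 2 ^ M \<le> (\<Sum>s\<in>Aset cV st. gT (real a / real b) s)"
proof -
  have "real (Sc cV a b st M) / 2 ^ M = (\<Sum>s\<in>Aset cV st. real (Jc a b (length s) M) / 2 ^ M)"
    unfolding Sc_eq by (simp add: sum_divide_distrib)
  also have "\<dots> \<le> (\<Sum>s\<in>Aset cV st. gT (real a / real b) s)"
  proof (rule sum_mono)
    fix s
    have "real (Jc a b (length s) M) \<le> 2 ^ M * gT (real a / real b) s" using Jc_bounds[OF assms] by blast
    then show "real (Jc a b (length s) M) / 2 ^ M \<le> gT (real a / real b) s" by (simp add: field_simps)
  qed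
  finally show ?thesis .
qed

lemma Sc_ge:
  assumes "0 < a" "0 < b" "F \<subseteq> Aset cV st"
  shows "(\<Sum>s\<in>F. gT (real a / real b) s) - real (card F) / 2 ^ M \<le> real (Sc cV a b st M) / 2 ^ M"
proof -
  have fin: "finite F" using assms(3) Aset_finite finite_subset by blast
  have "(\<Sum>s\<in>F. gT (real a / real b) s) - real (card F) / 2 ^ M = (\<Sum>s\<in>F. gT (real a / real b) s - 1 / 2 ^ M)"
    by (simp add: sum_subtractf)
  also have "\<dots> \<le> (\<Sum>s\<in>F. real (Jc a b (length s) M) / 2 ^ M)"
  proof (rule sum_mono)
    fix s
    have "2 ^ M * gT (real a / real b) s - 1 < real (Jc a b (length s) M)" using Jc_bounds[OF assms(1,2)] by blast
    then have "(2 ^ M * gT (real a / real b) s - 1) / 2 ^ M \<le> real (Jc a b (length s) M) / 2 ^ M"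
      by (intro divide_right_mono) auto
    moreover have "(2 ^ M * gT (real a / real b) s - 1) / 2 ^ M = gT (real a / real b) s - 1 / 2 ^ M"
      by (simp add: diff_divide_distrib)
    ultimately show "gT (real a / real b) s - 1 / 2 ^ M \<le> real (Jc a b (length s) M) / 2 ^ M" by simp
  qed
  also have "\<dots> \<le> (\<Sum>s\<in>Aset cV st. real (Jc a b (length s) M) / 2 ^ M)"
    using assms(3) Aset_finite by (intro sum_mono2) auto
  also have "\<dots> = real (Sc cV a b st M) / 2 ^ M"
    unfolding Sc_eq by (simp add: sum_divide_distrib)
  finally show ?thesis .
qed

lemma Lout_le: "n \<ge> n0 \<Longrightarrow> real (Lout e (xc n)) \<le> T * (real n - real e)"
proof -
  assume n: "n \<ge> n0"
  then have ne: "e \<le> n" using n0(1) by simp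
  have "real (Lout e (xc n)) = real ((Nv n * (n - e)) div 2 ^ n)" unfolding Lout_def Nv_def by simp
  also have "\<dots> \<le> real (Nv n * (n - e)) / real ((2::nat) ^ n)" by (rule of_nat_div_le_of_nat)
  also have "\<dots> = real (Nv n * (n - e)) / 2 ^ n" by simp
  also have "\<dots> = real (Nv n) / 2 ^ n * (real n - real e)" using ne by (simp add: of_nat_diff)
  also have "\<dots> \<le> T * (real n - real e)"
  proof (rule mult_right_mono)
    show "real (Nv n) / 2 ^ n \<le> T" using Nv_bounds(1)[of n] by (simp add: field_simps)
  qed (use ne in simp)
  finally show ?thesis .
qed

lemma gT_out: "n \<ge> n0 \<Longrightarrow> length s = Lout e (xc n) \<Longrightarrow> 2 ^ e / 2 ^ n \<le> gT T s"
proof -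
  assume n: "n \<ge> n0" and s: "length s = Lout e (xc n)"
  then have ne: "e \<le> n" using n0(1) by simp
  have "real (length s) / T \<le> real n - real e" using Lout_le[OF n] s T0 by (simp add: field_simps)
  then have "2 powr (- (real n - real e)) \<le> gT T s" unfolding gT_def by (intro powr_mono) auto
  moreover have "2 powr (- (real n - real e)) = 2 ^ e / 2 ^ n"
  proof -
    have "2 powr (- (real n - real e)) = 2 powr (real e) / 2 powr (real n)"
      by (simp add: powr_diff[symmetric])
    then show ?thesis by (simp add: powr_realpow)
  qed
  ultimately show ?thesis by simp
qed

lemma out_correct:
  assumes n: "n \<ge> n0" and Q: "Qm cV fa fb fc (xc n) w = 0"
  shows "length (inv str_enc (Om cV e (xc n) w)) = Lout e (xc n) \<and>
     \<not> Hc V (inv str_enc (Om cV e (xc n) w)) < enat (length (inv str_enc (Om cV e (xc n) w)))"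
proof -
  define k where "k = Suc (fst (prod_decode w))"
  define st where "st = fst (prod_decode (snd (prod_decode w)))"
  define M where "M = snd (prod_decode (snd (prod_decode w)))"
  define L where "L = Lout e (xc n)"
  define f' where "f' = (real (fa k) - real (fb k)) / (real (fc k) + 1)"
  define u where "u = uu n"
  have u: "u = real (Nv n + 1) / real ((2::nat) ^ n)" unfolding u_def uu_def by simp
  have f'S: "f' < real (Sc cV (Nv n + 1) (2 ^ n) st M) / 2 ^ M"
    using Qm_real[OF Q] unfolding f'_def k_def st_def M_def .
  have Thf: "Th \<le> f'" using up unfolding f'_def k_def Th_def A_def by simp
  have SA: "real (Sc cV (Nv n + 1) (2 ^ n) st M) / 2 ^ M \<le> (\<Sum>s\<in>Aset cV st. gT u s)"
    unfolding u by (rule Sc_le) auto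
  define i0 where "i0 = bmin (2 ^ L) (\<lambda>i. \<not> inA cV st (2 ^ L - 1 + i))"
  have ex: "\<exists>i<2 ^ L. \<not> inA cV st (2 ^ L - 1 + i)" by (rule count_exists)
  from bmin_P[OF ex] have i0: "\<not> inA cV st (2 ^ L - 1 + i0)" "i0 < 2 ^ L" unfolding i0_def by auto
  have Om: "Om cV e (xc n) w = 2 ^ L - 1 + i0" unfolding Om_def i0_def L_def st_def by simp
  define s where "s = inv str_enc (2 ^ L - 1 + i0)"
  have encs: "str_enc s = 2 ^ L - 1 + i0" unfolding s_def by simp
  have ls: "length s = L" unfolding s_def using i0(2) by (intro lenc_code) auto
  have nA: "\<not> Hc V s < enat (length s)"
  proof
    assume sA: "Hc V s < enat (length s)"
    have sn: "s \<notin> Aset cV st" unfolding Aset_def using encs i0(1) by simp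
    have fin: "finite (Aset cV st)" by (rule Aset_finite)
    have sub: "insert s (Aset cV st) \<subseteq> A" using sA A_sub unfolding A_def Aset_def by auto
    have "gT T s + (\<Sum>s\<in>Aset cV st. gT T s) = sum (gT T) (insert s (Aset cV st))"
      using sn fin by simp
    also have "\<dots> \<le> Th" using sub fin by (intro sum_A_le) auto
    finally have "gT T s < (\<Sum>s\<in>Aset cV st. gT u s) - (\<Sum>s\<in>Aset cV st. gT T s)"
      using Thf f'S SA by linarith
    also have "\<dots> = (\<Sum>s\<in>Aset cV st. gT u s - gT T s)" by (simp add: sum_subtractf)
    also have "\<dots> \<le> (\<Sum>s\<in>Aset cV st. (u - T) * ln 2 / T\<^sup>2 * (real (length s) * gT T' s))"
      using uu_bounds(1)[of n] uu_lt(1)[OF n] T0 unfolding u_def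
      by (intro sum_mono term_bound) auto
    also have "\<dots> = (u - T) * ln 2 / T\<^sup>2 * (\<Sum>s\<in>Aset cV st. real (length s) * gT T' s)"
      by (simp add: sum_distrib_left)
    also have "\<dots> \<le> (1 / 2 ^ n) * ln 2 / T\<^sup>2 * K"
    proof (rule mult_mono)
      show "(u - T) * ln 2 / T\<^sup>2 \<le> 1 / 2 ^ n * ln 2 / T\<^sup>2"
        using uu_bounds[of n] unfolding u_def by (intro divide_right_mono mult_right_mono) auto
      show "(\<Sum>s\<in>Aset cV st. real (length s) * gT T' s) \<le> K" using K fin by blast
      show "0 \<le> 1 / 2 ^ n * ln 2 / T\<^sup>2" by simp
      show "0 \<le> (\<Sum>s\<in>Aset cV st. real (length s) * gT T' s)"
        by (intro sum_nonneg mult_nonneg_nonneg) (auto intro: less_imp_le[OF gT_pos])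
    qed
    also have "\<dots> = D / 2 ^ n" unfolding D_def by simp
    also have "\<dots> \<le> 2 ^ e / 2 ^ n" using e by (simp add: divide_right_mono)
    also have "\<dots> \<le> gT T s" using gT_out[OF n] ls unfolding L_def by simp
    finally show False by simp
  qed
  show ?thesis using ls nA unfolding Om s_def L_def by simp
qed

lemma exists_w:
  assumes n: "n \<ge> n0"
  shows "\<exists>w. Qm cV fa fb fc (xc n) w = 0"
proof -
  define u where "u = uu n"
  have u: "u = real (Nv n + 1) / real ((2::nat) ^ n)" unfolding u_def uu_def by simp
  have Tu: "T < u" "u < 1" using uu_bounds(1)[of n] uu_lt(2)[OF n] unfolding u_def by auto
  obtain s0 where s0: "Hc V s0 < enat (length s0)" using nonempty by blast
  have s0ne: "s0 \<noteq> []" using s0 by (cases s0) (auto simp: zero_enat_def[symmetric])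
  define \<delta> where "\<delta> = gT u s0 - gT T s0"
  have d0: "0 < \<delta>" unfolding \<delta>_def using gT_strict[OF T0 Tu(1) s0ne] by simp
  have s0A: "s0 \<in> A" unfolding A_def using s0 by simp
  have gap: "Th + \<delta> \<le> infsum (gT u) A"
    unfolding Th_def \<delta>_def using Theta_gap[OF T0 Tu s0A s0ne] .
  have su: "gT u summable_on A" using gT_summable T0 Tu by auto
  obtain F where F: "finite F" "F \<subseteq> A" "infsum (gT u) A - \<delta> / 3 < sum (gT u) F"
    using infsum_approx[OF su, of "\<delta> / 3"] d0 by auto
  have conv: "(\<lambda>k. (real (fa k) - real (fb k)) / (real (fc k) + 1)) \<longlonglongrightarrow> Th"
    using lim unfolding Th_def A_def .
  then have "\<forall>\<^sub>F k in sequentially. (real (fa k) - real (fb k)) / (real (fc k) + 1) < Th + \<delta> / 3"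
    using d0 by (intro order_tendstoD) auto
  then obtain k0 where k0: "\<And>k. k \<ge> k0 \<Longrightarrow> (real (fa k) - real (fb k)) / (real (fc k) + 1) < Th + \<delta> / 3"
    unfolding eventually_sequentially by blast
  obtain M :: nat where M: "real (card F) * 3 / \<delta> < 2 ^ M"
    using real_arch_pow[of 2 "real (card F) * 3 / \<delta>"] by auto
  have MF: "real (card F) / 2 ^ M < \<delta> / 3"
    using M d0 by (simp add: field_simps)
  have Fall: "\<forall>s\<in>F. Hc V s < enat (length s)" using F(2) unfolding A_def by auto
  obtain st where st: "\<forall>s\<in>F. inA cV st (str_enc s)" using inA_complete[OF rep F(1) Fall] by blast
  have FA: "F \<subseteq> Aset cV st" using st unfolding Aset_def by auto
  have "sum (gT u) F - real (card F) / 2 ^ M \<le> real (Sc cV (Nv n + 1) (2 ^ n) st M) / 2 ^ M"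
    unfolding u by (rule Sc_ge[OF _ _ FA]) auto
  then have Sbig: "Th + \<delta> / 3 < real (Sc cV (Nv n + 1) (2 ^ n) st M) / 2 ^ M"
    using F(3) gap MF by linarith
  define w where "w = prod_encode (k0, prod_encode (st, M))"
  have "(real (fa (Suc k0)) - real (fb (Suc k0))) / (real (fc (Suc k0)) + 1) < real (Sc cV (Nv n + 1) (2 ^ n) st M) / 2 ^ M"
    using k0[of "Suc k0"] Sbig by simp
  then have "(real (fa (Suc k0)) - real (fb (Suc k0))) * 2 ^ M < (real (fc (Suc k0)) + 1) * real (Sc cV (Nv n + 1) (2 ^ n) st M)"
    by (simp add: field_simps)
  then have "real (fa (Suc k0)) * 2 ^ M < real (fb (Suc k0)) * 2 ^ M + (real (fc (Suc k0)) + 1) * real (Sc cV (Nv n + 1) (2 ^ n) st M)"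
    by (simp add: algebra_simps)
  then have "real (fa (Suc k0) * 2 ^ M) < real (fb (Suc k0) * 2 ^ M + (fc (Suc k0) + 1) * Sc cV (Nv n + 1) (2 ^ n) st M)"
    by (simp add: algebra_simps)
  then have "fa (Suc k0) * 2 ^ M < fb (Suc k0) * 2 ^ M + (fc (Suc k0) + 1) * Sc cV (Nv n + 1) (2 ^ n) st M"
    by (simp only: of_nat_less_iff)
  then have "Qm cV fa fb fc (xc n) w = 0" unfolding Qm_def w_def Nv_def by simp
  then show ?thesis by blast
qed

end

context setting
begin

lemma Lout_ge: "n \<ge> n0 \<Longrightarrow> T * real n - real e - 2 \<le> real (Lout e (xc n))"
proof -
  assume n: "n \<ge> n0"
  then have ne: "e \<le> n" using n0(1) by simp
  define m where "m = Nv n * (n - e)"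
  have "real (m div 2 ^ n) = of_int \<lfloor>real m / real ((2::nat) ^ n)\<rfloor>"
    by (metis floor_divide_of_nat_eq of_int_of_nat_eq)
  then have a: "real m / 2 ^ n - 1 < real (m div 2 ^ n)" by simp
  have nn: "real n \<le> 2 ^ n"
  proof (induction n)
    case (Suc n)
    have "(1::real) \<le> 2 ^ n" by simp
    moreover have "real (Suc n) = 1 + real n" "(2::real) ^ Suc n = 2 * 2 ^ n" by simp_all
    ultimately show ?case using Suc.IH by linarith
  qed simp
  have p: "(0::real) < 2 ^ n" by simp
  have "real m / 2 ^ n = real (Nv n) / 2 ^ n * (real n - real e)" unfolding m_def using ne by (simp add: of_nat_diff)
  also have "\<dots> \<ge> (T - 1 / 2 ^ n) * (real n - real e)"
  proof (rule mult_right_mono)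
    have "(T * 2 ^ n - 1) / 2 ^ n \<le> real (Nv n) / 2 ^ n"
      using Nv_bounds(2)[of n] p by (intro divide_right_mono) auto
    moreover have "(T * 2 ^ n - 1) / 2 ^ n = T - 1 / 2 ^ n" using p by (simp add: diff_divide_distrib)
    ultimately show "T - 1 / 2 ^ n \<le> real (Nv n) / 2 ^ n" by simp
  qed (use ne in simp)
  finally have b: "(T - 1 / 2 ^ n) * (real n - real e) \<le> real m / 2 ^ n" .
  have "real n - real e \<le> 2 ^ n" using nn of_nat_0_le_iff[of e] by linarith
  then have "(real n - real e) / 2 ^ n \<le> 1" using p by (simp add: divide_le_eq_1)
  moreover have "(T - 1 / 2 ^ n) * (real n - real e) = T * (real n - real e) - (real n - real e) / 2 ^ n"
    by (simp add: left_diff_distrib)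
  ultimately have c: "T * (real n - real e) - 1 \<le> real m / 2 ^ n" using b by linarith
  have "T * real e \<le> 1 * real e" using T1 by (intro mult_right_mono) auto
  then have "T * real n - real e - 2 \<le> T * (real n - real e) - 2" by (simp add: algebra_simps)
  then show ?thesis using a c unfolding Lout_def m_def Nv_def by simp
qed

definition "phiG = (\<lambda>x. if \<exists>w. Qm cV fa fb fc x w = 0 then Some (Om cV e x (LEAST w. Qm cV fa fb fc x w = 0)) else None)"

lemma pr_phiG: "partial_recursive phiG"
  unfolding phiG_def by (intro pr_search c1_Qm c1_Om cfa cfb cfc)

lemma phiG_out:
  assumes n: "n \<ge> n0"
  shows "\<exists>s. phiG (xc n) = Some (str_enc s) \<and> length s = Lout e (xc n) \<and> \<not> Hc V s < enat (length s)"
proof -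
  let ?w = "LEAST w. Qm cV fa fb fc (xc n) w = 0"
  have ex: "\<exists>w. Qm cV fa fb fc (xc n) w = 0" by (rule exists_w[OF n])
  then have "Qm cV fa fb fc (xc n) ?w = 0" by (rule LeastI_ex)
  from out_correct[OF n this]
  have o: "length (inv str_enc (Om cV e (xc n) ?w)) = Lout e (xc n)"
    "\<not> Hc V (inv str_enc (Om cV e (xc n) ?w)) < enat (length (inv str_enc (Om cV e (xc n) ?w)))" by blast+
  have "phiG (xc n) = Some (str_enc (inv str_enc (Om cV e (xc n) ?w)))" unfolding phiG_def using ex by simp
  then show ?thesis using o by blast
qed

end

theorem theorem10:
  fixes U V :: "bool list \<Rightarrow> bool list option" and T :: real
  assumes "optimal_machine U"
    and "optimal_machine V"
    and "0 < T" and "T < 1"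
    and "right_computable (Theta V T)"
  shows "weakly_chaitin_random U T T"
proof -
  note oU = assms(1) and oV = assms(2) and T0 = assms(3) and T1 = assms(4)
  obtain f where f: "computable_rat_seq f" "\<forall>n\<ge>1. Theta V T \<le> of_rat (f n)" "(\<lambda>n. of_rat (f n)) \<longlonglongrightarrow> Theta V T"
    using assms(5) unfolding right_computable_def by blast
  obtain fa fb fc where abc: "total_recursive fa" "total_recursive fb" "total_recursive fc"
    "\<forall>n. f n = (of_int (int (fa n) - int (fb n))) / of_nat (Suc (fc n))"
    using f(1) unfolding computable_rat_seq_def by blast
  have fr: "(of_rat (f n) :: real) = (real (fa n) - real (fb n)) / (real (fc n) + 1)" for n
    using abc(4) by (simp add: of_rat_divide of_rat_diff of_rat_add add.commute)
  have Th: "Theta V T = infsum (gT T) {s. Hc V s < enat (length s)}"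
    unfolding Theta_def gT_def by simp
  obtain cV where cV: "rep cV V" using oV rep_exists unfolding optimal_machine_def prefix_free_machine_def by blast
  interpret S: setting V cV T fa fb fc
  proof
    show "rep cV V" by (rule cV)
    show "0 < T" "T < 1" by (rule T0, rule T1)
    show "comp1 fa" "comp1 fb" "comp1 fc" using abc comp1_total by auto
    show "(\<lambda>k. (real (fa k) - real (fb k)) / (real (fc k) + 1)) \<longlonglongrightarrow> infsum (gT T) {s. Hc V s < enat (length s)}"
      using f(3) unfolding fr Th .
    show "\<forall>k\<ge>1. infsum (gT T) {s. Hc V s < enat (length s)} \<le> (real (fa k) - real (fb k)) / (real (fc k) + 1)"
      using f(2) unfolding fr Th .
    show "\<exists>s. Hc V s < enat (length s)" by (rule A_nonempty[OF oV])
  qed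
  define C where "C = (\<lambda>p. Option.bind (U p) (\<lambda>s. map_option (inv str_enc) (S.phiG (str_enc s))))"
  have pfU: "prefix_free_machine U" using oU unfolding optimal_machine_def by blast
  have prU: "partial_recursive (\<lambda>x. map_option str_enc (U (inv str_enc x)))"
    using pfU unfolding prefix_free_machine_def partial_recursive_str_def by blast
  have "partial_recursive (\<lambda>x. Option.bind (map_option str_enc (U (inv str_enc x))) S.phiG)"
    by (rule pr_bind[OF prU S.pr_phiG])
  moreover have "(\<lambda>x. Option.bind (map_option str_enc (U (inv str_enc x))) S.phiG) =
       (\<lambda>x. map_option str_enc (C (inv str_enc x)))"
  proof
    fix x show "Option.bind (map_option str_enc (U (inv str_enc x))) S.phiG = map_option str_enc (C (inv str_enc x))"
      unfolding C_def by (cases "U (inv str_enc x)") (auto simp: option.map_comp comp_def option.map_ident)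
  qed
  ultimately have prC: "partial_recursive_str C" unfolding partial_recursive_str_def by simp
  have domC: "dom C \<subseteq> dom U"
  proof
    fix x assume "x \<in> dom C"
    then show "x \<in> dom U" unfolding C_def by (cases "U x") auto
  qed
  have "prefix_free (dom U)" using pfU unfolding prefix_free_machine_def by blast
  then have "prefix_free (dom C)" using domC unfolding prefix_free_def by blast
  then have pfC: "prefix_free_machine C" using prC unfolding prefix_free_machine_def by blast
  obtain d where d: "\<forall>p\<in>dom C. \<exists>q\<in>dom V. V q = C p \<and> length q \<le> length p + d"
    using oV pfC unfolding optimal_machine_def by blast
  define c where "c = S.n0 + S.e + 2 + d"
  have bound: "T * real n - real c \<le> real h" if h: "Hc U (real_prefix T n) = enat h" for n h
  proof (cases "n \<ge> S.n0")
    case False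
    have "T * real n \<le> 1 * real n" using T1 by (intro mult_right_mono) auto
    then show ?thesis using False unfolding c_def by simp
  next
    case True
    obtain p where p: "U p = Some (real_prefix T n)" "length p = h" using Hc_attained[OF h] by blast
    obtain s where s: "S.phiG (S.xc n) = Some (str_enc s)" "length s = Lout S.e (S.xc n)" "\<not> Hc V s < enat (length s)"
      using S.phiG_out[OF True] by blast
    have Cp: "C p = Some s" unfolding C_def using p(1) s(1) unfolding S.xc_def by simp
    then have "p \<in> dom C" by auto
    then obtain q where q: "V q = C p" "length q \<le> length p + d" using d by blast
    have "enat (length s) \<le> Hc V s" using s(3) by simp
    also have "Hc V s \<le> enat (length q)" using q(1) Cp by (intro Hc_le) simp
    finally have "length s \<le> h + d" using q(2) p(2) by simp
    then have "real (Lout S.e (S.xc n)) \<le> real h + real d" using s(2) by simp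
    moreover have "T * real n - real S.e - 2 \<le> real (Lout S.e (S.xc n))" by (rule S.Lout_ge[OF True])
    ultimately show ?thesis unfolding c_def by simp
  qed
  show ?thesis unfolding weakly_chaitin_random_def
  proof (intro exI[of _ c] allI impI)
    fix n :: nat assume "1 \<le> n"
    show "ereal (T * real n - real c) \<le> (case Hc U (real_prefix T n) of enat k \<Rightarrow> ereal (real k) | \<infinity> \<Rightarrow> \<infinity>)"
      using bound by (cases "Hc U (real_prefix T n)") auto
  qed
qed

end
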